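(* Let $m\in\mathbb{N}^+$ and let all random vectors below take values in $\mathbb{R}^m$ and have finite first moment. (i) (Independent sum) If $\bm A$ is independent of $\bm X$ and of $\bm Y$, then $S_2^2(\bm A+\bm X,\bm A+\bm Y)\le S_2^2(\bm X,\bm Y)$. (ii) (Scaling) For every $c>0$, $S_2^2(c\bm X,c\bm Y)=c\,S_2^2(\bm X,\bm Y)$. (iii) (Unbiased sampling gradients) Let $P$ be a distribution on $\mathbb{R}^m$ with finite first moment, let $\bm X_1,\dots,\bm X_r$ be i.i.d. samples from $P$ with empirical distribution $\hat P=\frac1r(\delta_{\bm X_1}+\dots+\delta_{\bm X_r})$, and let $\{G_\theta\}_{\theta\in\Theta}$, $\Theta\subseteq\mathbb{R}^d$ open, be a family of distributions with finite first moment. Assume sufficient regularity that $\theta\mapsto S_2^2(G_\theta,P)$ and $\theta\mapsto C_2^2(\langle G_\theta,\bm\nu\rangle,\langle\hat P,\bm\nu\rangle)$ are differentiable and that $\nabla_\theta$ may be interchanged with expectation over the samples and with integration over $\bm\nu\in\mathbb{S}^{m-1}$. Then $$\mathbb{E}_{\bm X_1,\dots,\bm X_r\sim P}\left[\nabla_\theta S_2^2(G_\theta,\hat P)\right]=\nabla_\theta S_2^2(G_\theta,P),$$ and, if $\bm\nu$ is uniformly distributed on $\mathbb{S}^{m-1}$ independently of the samples, $$B_{m-1}\,\mathbb{E}_{\bm\nu}\,\mathbb{E}_{\bm X_1,\dots,\bm X_r\sim P}\left[\nabla_\theta C_2^2(\langle G_\theta,\bm\nu\rangle,\langle\hat P,\bm\nu\rangle)\right]=\nabla_\theta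 S_2^2(G_\theta,P),$$ where $B_{m-1}=2\pi^{m/2}/\Gamma(m/2)$.
   Context: For real random variables (or distributions on $\mathbb{R}$) $Z,W$ with CDFs $F_Z,F_W$, $C_2^2(Z,W)=\int_{\mathbb{R}}|F_Z-F_W|^2dx$. For random vectors (or distributions) $\bm X,\bm Y$ on $\mathbb{R}^m$, $S_2^2(\bm X,\bm Y)=\int_{\mathbb{S}^{m-1}}C_2^2(\langle\bm X,\bm\nu\rangle,\langle\bm Y,\bm\nu\rangle)\,d\bm\nu$, where $\langle\bm X,\bm\nu\rangle=\bm X^{\mathrm T}\bm\nu$, $\mathbb{S}^{m-1}$ is the unit sphere and $d\bm\nu$ its surface measure (of total mass $B_{m-1}=2\pi^{m/2}/\Gamma(m/2)$). For a distribution $Q$, $\langle Q,\bm\nu\rangle$ denotes the law of $\langle\bm Z,\bm\nu\rangle$ with $\bm Z\sim Q$. *)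

theory Defs
  imports "HOL-Probability.Probability"
begin

definition C2sq :: "real measure \<Rightarrow> real measure \<Rightarrow> real" where
  "C2sq Z W = (\<integral>x. (cdf Z x - cdf W x)\<^sup>2 \<partial>lborel)"

definition proj :: "(real ^ 'm) measure \<Rightarrow> real ^ 'm \<Rightarrow> real measure" where
  "proj Q \<nu> = distr Q borel (\<lambda>z. z \<bullet> \<nu>)"

text \<open>Surface measure on the unit sphere S^(m-1), defined as the cone measure:
  sigma(A) = m * Lebesgue measure of {t x | 0 < t <= 1, x in A}.\<close>
definition sphere_measure :: "(real ^ 'm) measure" where
  "sphere_measure = measure_of (sphere 0 1) (sets (restrict_space borel (sphere 0 1)))
     (\<lambda>A. ennreal (real CARD('m)) *
            emeasure lborel {t *\<^sub>R x | t x. t \<in> {0<..1} \<and> x \<in> A})"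

definition uniform_sphere :: "(real ^ 'm) measure" where
  "uniform_sphere = uniform_measure sphere_measure (sphere 0 1)"

definition S2sq :: "(real ^ 'm) measure \<Rightarrow> (real ^ 'm) measure \<Rightarrow> real" where
  "S2sq Q R = (\<integral>\<nu>. C2sq (proj Q \<nu>) (proj R \<nu>) \<partial>sphere_measure)"

definition empirical :: "nat \<Rightarrow> (nat \<Rightarrow> real ^ 'm) \<Rightarrow> (real ^ 'm) measure" where
  "empirical r xs = measure_of UNIV (sets borel)
     (\<lambda>A. ennreal (real (card {i \<in> {..<r}. xs i \<in> A}) / real r))"

definition grad :: "('a::real_inner \<Rightarrow> real) \<Rightarrow> 'a \<Rightarrow> 'a" where
  "grad f x = (THE D. GDERIV f x :> D)"

definition fm_dist :: "(real ^ 'm) measure \<Rightarrow> bool" where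
  "fm_dist Q \<longleftrightarrow> prob_space Q \<and> sets Q = sets borel \<and> integrable Q (\<lambda>z. norm z)"

definition iid_samples :: "nat \<Rightarrow> (real ^ 'm) measure \<Rightarrow> (nat \<Rightarrow> real ^ 'm) measure" where
  "iid_samples r P = PiM {..<r} (\<lambda>_. P)"

end

theory Submission
  imports Defs
begin

lemma proj_distr:
  fixes f :: "'s \<Rightarrow> real ^ 'm"
  assumes "f \<in> borel_measurable M"
  shows "proj (distr M borel f) \<nu> = distr M borel (\<lambda>\<omega>. f \<omega> \<bullet> \<nu>)"
  unfolding proj_def using assms by (subst distr_distr) (auto simp: comp_def)

lemma cdf_distr:
  fixes g :: "'s \<Rightarrow> real"
  assumes "g \<in> borel_measurable M"
  shows "cdf (distr M borel g) x = measure M {\<omega>\<in>space M. g \<omega> \<le> x}"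
  unfolding cdf_def using assms
  by (subst measure_distr) (auto intro!: arg_cong[where f="measure M"])

lemma C2sq_scale:
  fixes g h :: "'s \<Rightarrow> real"
  assumes [measurable]: "g \<in> borel_measurable M" "h \<in> borel_measurable M" and c: "c > 0"
  shows "C2sq (distr M borel (\<lambda>\<omega>. c * g \<omega>)) (distr M borel (\<lambda>\<omega>. c * h \<omega>))
       = c * C2sq (distr M borel g) (distr M borel h)"
proof -
  let ?F = "\<lambda>x. (cdf (distr M borel g) x - cdf (distr M borel h) x)\<^sup>2"
  have eq: "(cdf (distr M borel (\<lambda>\<omega>. c * g \<omega>)) x - cdf (distr M borel (\<lambda>\<omega>. c * h \<omega>)) x)\<^sup>2
     = ?F (x / c)" for x
  proof -
    have "{\<omega>\<in>space M. c * g \<omega> \<le> x} = {\<omega>\<in>space M. g \<omega> \<le> x / c}"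
         "{\<omega>\<in>space M. c * h \<omega> \<le> x} = {\<omega>\<in>space M. h \<omega> \<le> x / c}"
      using c by (auto simp: field_simps)
    then show ?thesis by (simp add: cdf_distr)
  qed
  have "C2sq (distr M borel (\<lambda>\<omega>. c * g \<omega>)) (distr M borel (\<lambda>\<omega>. c * h \<omega>))
      = (\<integral>x. ?F (x / c) \<partial>lborel)" unfolding C2sq_def by (simp add: eq)
  also have "\<dots> = \<bar>c\<bar> *\<^sub>R (\<integral>x. ?F ((0 + c * x) / c) \<partial>lborel)"
    by (rule lborel_integral_real_affine) (use c in auto)
  also have "\<dots> = c * C2sq (distr M borel g) (distr M borel h)"
    using c unfolding C2sq_def by simp
  finally show ?thesis .
qed

lemma part2:
  fixes X Y :: "'s \<Rightarrow> real ^ 'm"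
  assumes [measurable]: "X \<in> borel_measurable M" "Y \<in> borel_measurable M" and c: "c > 0"
  shows "S2sq (distr M borel (\<lambda>\<omega>. c *\<^sub>R X \<omega>)) (distr M borel (\<lambda>\<omega>. c *\<^sub>R Y \<omega>))
          = c * S2sq (distr M borel X) (distr M borel Y)"
proof -
  have "C2sq (proj (distr M borel (\<lambda>\<omega>. c *\<^sub>R X \<omega>)) \<nu>) (proj (distr M borel (\<lambda>\<omega>. c *\<^sub>R Y \<omega>)) \<nu>)
      = c * C2sq (proj (distr M borel X) \<nu>) (proj (distr M borel Y) \<nu>)" for \<nu>
    using C2sq_scale[of "\<lambda>\<omega>. X \<omega> \<bullet> \<nu>" M "\<lambda>\<omega>. Y \<omega> \<bullet> \<nu>" c] c
    by (simp add: proj_distr)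
  then show ?thesis unfolding S2sq_def by simp
qed

lemma cdf_distr_mono:
  fixes g :: "'s \<Rightarrow> real"
  assumes "prob_space M" "g \<in> borel_measurable M"
  shows "mono (cdf (distr M borel g))"
proof -
  interpret prob_space M by fact
  show ?thesis
    unfolding mono_def using assms(2)
    by (auto simp: cdf_distr intro!: finite_measure_mono)
qed

lemma cdf_distr_meas[measurable]:
  fixes g :: "'s \<Rightarrow> real"
  assumes "prob_space M" "g \<in> borel_measurable M"
  shows "cdf (distr M borel g) \<in> borel_measurable borel"
  by (rule borel_measurable_mono[OF cdf_distr_mono[OF assms]])

lemma cdf_distr_bounds:
  fixes g :: "'s \<Rightarrow> real"
  assumes "prob_space M" "g \<in> borel_measurable M"
  shows "0 \<le> cdf (distr M borel g) x" "cdf (distr M borel g) x \<le> 1"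
proof -
  interpret prob_space M by fact
  show "0 \<le> cdf (distr M borel g) x" "cdf (distr M borel g) x \<le> 1"
    using assms(2) by (auto simp: cdf_distr)
qed

lemma L1_cdf:
  fixes g :: "'s \<Rightarrow> real"
  assumes P: "prob_space M" and g[measurable]: "g \<in> borel_measurable M"
  shows "(\<integral>\<^sup>+x. ennreal \<bar>cdf (distr M borel g) x - indicator {0..} x\<bar> \<partial>lborel)
       = (\<integral>\<^sup>+\<omega>. ennreal \<bar>g \<omega>\<bar> \<partial>M)"
proof -
  interpret prob_space M by fact
  interpret PS: pair_sigma_finite lborel M
    unfolding pair_sigma_finite_def using lborel.sigma_finite_measure_axioms sigma_finite_measure_axioms by blast
  define T where "T = (\<lambda>x \<omega>. (g \<omega> \<le> x \<and> x < (0::real)) \<or> (0 \<le> x \<and> x < g \<omega>))"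
  have Tm: "(\<lambda>(x,\<omega>). indicator {p. T (fst p) (snd p)} (x,\<omega>) :: ennreal) \<in> borel_measurable (lborel \<Otimes>\<^sub>M M)"
    unfolding T_def by measurable
  have 1: "ennreal \<bar>cdf (distr M borel g) x - indicator {0..} x\<bar>
        = (\<integral>\<^sup>+\<omega>. indicator {p. T (fst p) (snd p)} (x,\<omega>) \<partial>M)" for x
  proof -
    have "(\<integral>\<^sup>+\<omega>. indicator {p. T (fst p) (snd p)} (x,\<omega>) \<partial>M)
        = (\<integral>\<^sup>+\<omega>. indicator {\<omega>\<in>space M. T x \<omega>} \<omega> \<partial>M)"
      by (intro nn_integral_cong) (auto simp: indicator_def)
    also have "\<dots> = emeasure M {\<omega>\<in>space M. T x \<omega>}"
      by (rule nn_integral_indicator) (unfold T_def, measurable)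
    also have "\<dots> = ennreal \<bar>cdf (distr M borel g) x - indicator {0..} x\<bar>"
    proof (cases "x < 0")
      case True
      then have "{\<omega>\<in>space M. T x \<omega>} = {\<omega>\<in>space M. g \<omega> \<le> x}" by (auto simp: T_def)
      then show ?thesis using True by (simp add: cdf_distr emeasure_eq_measure)
    next
      case False
      then have "{\<omega>\<in>space M. T x \<omega>} = space M - {\<omega>\<in>space M. g \<omega> \<le> x}" by (auto simp: T_def)
      then have "emeasure M {\<omega>\<in>space M. T x \<omega>} = ennreal (1 - measure M {\<omega>\<in>space M. g \<omega> \<le> x})"
        by (simp add: emeasure_eq_measure prob_compl)
      then show ?thesis using False by (simp add: cdf_distr)
    qed
    finally show ?thesis by simp
  qed
  have 2: "(\<integral>\<^sup>+x. indicator {p. T (fst p) (snd p)} (x,\<omega>) \<partial>lborel) = ennreal \<bar>g \<omega>\<bar>" for \<omega>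
  proof (cases "g \<omega> < 0")
    case True
    have "(\<integral>\<^sup>+x. indicator {p. T (fst p) (snd p)} (x,\<omega>) \<partial>lborel) = (\<integral>\<^sup>+x. indicator {g \<omega>..<0} x \<partial>lborel)"
      using True by (intro nn_integral_cong) (auto simp: T_def indicator_def)
    then show ?thesis using True by simp
  next
    case False
    have "(\<integral>\<^sup>+x. indicator {p. T (fst p) (snd p)} (x,\<omega>) \<partial>lborel) = (\<integral>\<^sup>+x. indicator {0..<g \<omega>} x \<partial>lborel)"
      using False by (intro nn_integral_cong) (auto simp: T_def indicator_def)
    then show ?thesis using False by simp
  qed
  have "(\<integral>\<^sup>+x. ennreal \<bar>cdf (distr M borel g) x - indicator {0..} x\<bar> \<partial>lborel)
      = (\<integral>\<^sup>+x. (\<integral>\<^sup>+\<omega>. indicator {p. T (fst p) (snd p)} (x,\<omega>) \<partial>M) \<partial>lborel)"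
    by (simp add: 1)
  also have "\<dots> = (\<integral>\<^sup>+\<omega>. (\<integral>\<^sup>+x. indicator {p. T (fst p) (snd p)} (x,\<omega>) \<partial>lborel) \<partial>M)"
    using PS.Fubini[OF Tm[unfolded split_beta']] by (simp add: split_beta')
  also have "\<dots> = (\<integral>\<^sup>+\<omega>. ennreal \<bar>g \<omega>\<bar> \<partial>M)" by (simp add: 2)
  finally show ?thesis .
qed

lemma L1_diff:
  fixes g1 :: "'s \<Rightarrow> real" and g2 :: "'t \<Rightarrow> real"
  assumes P1: "prob_space M1" and g1[measurable]: "g1 \<in> borel_measurable M1" and i1: "integrable M1 g1"
  assumes P2: "prob_space M2" and g2[measurable]: "g2 \<in> borel_measurable M2" and i2: "integrable M2 g2"
  shows "(\<integral>\<^sup>+x. ennreal \<bar>cdf (distr M1 borel g1) x - cdf (distr M2 borel g2) x\<bar> \<partial>lborel)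
        \<le> ennreal ((\<integral>\<omega>. \<bar>g1 \<omega>\<bar> \<partial>M1) + (\<integral>\<omega>. \<bar>g2 \<omega>\<bar> \<partial>M2))"
    and "integrable lborel (\<lambda>x. \<bar>cdf (distr M1 borel g1) x - cdf (distr M2 borel g2) x\<bar>)"
    and "(\<integral>x. \<bar>cdf (distr M1 borel g1) x - cdf (distr M2 borel g2) x\<bar> \<partial>lborel)
        \<le> (\<integral>\<omega>. \<bar>g1 \<omega>\<bar> \<partial>M1) + (\<integral>\<omega>. \<bar>g2 \<omega>\<bar> \<partial>M2)"
    and "integrable lborel (\<lambda>x. (cdf (distr M1 borel g1) x - cdf (distr M2 borel g2) x)\<^sup>2)"
    and "C2sq (distr M1 borel g1) (distr M2 borel g2) \<le> (\<integral>\<omega>. \<bar>g1 \<omega>\<bar> \<partial>M1) + (\<integral>\<omega>. \<bar>g2 \<omega>\<bar> \<partial>M2)"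
    and "0 \<le> C2sq (distr M1 borel g1) (distr M2 borel g2)"
proof -
  let ?F1 = "cdf (distr M1 borel g1)" and ?F2 = "cdf (distr M2 borel g2)"
  let ?H = "indicator {0..} :: real \<Rightarrow> real"
  note m1 = cdf_distr_meas[OF P1 g1] and m2 = cdf_distr_meas[OF P2 g2]
  have e1: "(\<integral>\<^sup>+\<omega>. ennreal \<bar>g1 \<omega>\<bar> \<partial>M1) = ennreal (\<integral>\<omega>. \<bar>g1 \<omega>\<bar> \<partial>M1)"
    by (rule nn_integral_eq_integral) (use i1 in auto)
  have e2: "(\<integral>\<^sup>+\<omega>. ennreal \<bar>g2 \<omega>\<bar> \<partial>M2) = ennreal (\<integral>\<omega>. \<bar>g2 \<omega>\<bar> \<partial>M2)"
    by (rule nn_integral_eq_integral) (use i2 in auto)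
  have "(\<integral>\<^sup>+x. ennreal \<bar>?F1 x - ?F2 x\<bar> \<partial>lborel)
      \<le> (\<integral>\<^sup>+x. ennreal \<bar>?F1 x - ?H x\<bar> + ennreal \<bar>?F2 x - ?H x\<bar> \<partial>lborel)"
    by (intro nn_integral_mono) (simp add: ennreal_plus[symmetric] del: ennreal_plus)
  also have "\<dots> = (\<integral>\<^sup>+x. ennreal \<bar>?F1 x - ?H x\<bar> \<partial>lborel) + (\<integral>\<^sup>+x. ennreal \<bar>?F2 x - ?H x\<bar> \<partial>lborel)"
    by (rule nn_integral_add) (use m1 m2 in auto)
  also have "\<dots> = ennreal ((\<integral>\<omega>. \<bar>g1 \<omega>\<bar> \<partial>M1) + (\<integral>\<omega>. \<bar>g2 \<omega>\<bar> \<partial>M2))"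
    by (simp add: L1_cdf[OF P1 g1] L1_cdf[OF P2 g2] e1 e2)
  finally show A: "(\<integral>\<^sup>+x. ennreal \<bar>?F1 x - ?F2 x\<bar> \<partial>lborel)
        \<le> ennreal ((\<integral>\<omega>. \<bar>g1 \<omega>\<bar> \<partial>M1) + (\<integral>\<omega>. \<bar>g2 \<omega>\<bar> \<partial>M2))" .
  show I: "integrable lborel (\<lambda>x. \<bar>?F1 x - ?F2 x\<bar>)"
    by (rule integrableI_bounded) (use A m1 m2 in \<open>auto intro: le_less_trans simp: ennreal_plus[symmetric] simp del: ennreal_plus\<close>)
  have "ennreal (\<integral>x. \<bar>?F1 x - ?F2 x\<bar> \<partial>lborel) = (\<integral>\<^sup>+x. ennreal \<bar>?F1 x - ?F2 x\<bar> \<partial>lborel)"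
    by (rule nn_integral_eq_integral[symmetric]) (use I in auto)
  with A show B: "(\<integral>x. \<bar>?F1 x - ?F2 x\<bar> \<partial>lborel) \<le> (\<integral>\<omega>. \<bar>g1 \<omega>\<bar> \<partial>M1) + (\<integral>\<omega>. \<bar>g2 \<omega>\<bar> \<partial>M2)"
    by (metis ennreal_le_iff integral_nonneg_AE AE_I2 abs_ge_zero add_nonneg_nonneg integral_abs_bound order_trans)
  have le: "(?F1 x - ?F2 x)\<^sup>2 \<le> \<bar>?F1 x - ?F2 x\<bar>" for x
  proof -
    have "\<bar>?F1 x - ?F2 x\<bar> \<le> 1"
      using cdf_distr_bounds[OF P1 g1, of x] cdf_distr_bounds[OF P2 g2, of x] by auto
    then have "\<bar>?F1 x - ?F2 x\<bar> * \<bar>?F1 x - ?F2 x\<bar> \<le> 1 * \<bar>?F1 x - ?F2 x\<bar>"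
      by (intro mult_right_mono) auto
    then show ?thesis by (simp add: power2_eq_square abs_mult_self_eq)
  qed
  show I2: "integrable lborel (\<lambda>x. (?F1 x - ?F2 x)\<^sup>2)"
    by (rule Bochner_Integration.integrable_bound[OF I]) (use m1 m2 le in auto)
  have "C2sq (distr M1 borel g1) (distr M2 borel g2) \<le> (\<integral>x. \<bar>?F1 x - ?F2 x\<bar> \<partial>lborel)"
    unfolding C2sq_def by (rule integral_mono[OF I2 I]) (use le in auto)
  with B show "C2sq (distr M1 borel g1) (distr M2 borel g2) \<le> (\<integral>\<omega>. \<bar>g1 \<omega>\<bar> \<partial>M1) + (\<integral>\<omega>. \<bar>g2 \<omega>\<bar> \<partial>M2)"
    by linarith
  show "0 \<le> C2sq (distr M1 borel g1) (distr M2 borel g2)"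
    unfolding C2sq_def by simp
qed

lemma space_borelD: "sets D = sets (borel :: ('a::topological_space) measure) \<Longrightarrow> space D = UNIV"
  by (metis sets_eq_imp_space_eq space_borel)

lemma cdf_proj:
  fixes D :: "(real ^ 'm) measure"
  assumes "sets D = sets borel"
  shows "cdf (proj D \<nu>) x = measure D {z. z \<bullet> \<nu> \<le> x}"
proof -
  have [measurable]: "(\<lambda>z. z \<bullet> \<nu>) \<in> borel_measurable D"
    using assms by (simp add: measurable_cong_sets[OF assms refl])
  show ?thesis unfolding proj_def using assms
    by (simp add: cdf_distr space_borelD)
qed

lemma cdf_proj_meas:
  fixes D :: "(real ^ 'm) measure"
  assumes S: "sets D = sets borel" and F: "finite_measure D"
  shows "(\<lambda>p. cdf (proj D (fst p)) (snd p)) \<in> borel_measurable (borel \<Otimes>\<^sub>M borel :: ((real ^ 'm) \<times> real) measure)"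
proof -
  interpret finite_measure D by fact
  define f where "f = (\<lambda>(p::((real^'m) \<times> real)) (z::real^'m). if z \<bullet> fst p \<le> snd p then 1 else (0::real))"
  have eq: "cdf (proj D (fst p)) (snd p) = (\<integral>z. f p z \<partial>D)" for p
  proof -
    have mz: "{z::real^'m. z \<bullet> fst p \<le> snd p} \<in> sets D"
      unfolding S by measurable
    have "(\<integral>z. f p z \<partial>D) = (\<integral>z. indicator {z::real^'m. z \<bullet> fst p \<le> snd p} z \<partial>D)"
      by (intro Bochner_Integration.integral_cong) (auto simp: indicator_def f_def)
    also have "\<dots> = measure D {z. z \<bullet> fst p \<le> snd p}"
      using mz by (simp add: emeasure_eq_measure)
    finally show ?thesis by (simp add: cdf_proj[OF S])
  qed
  have fm: "case_prod f \<in> borel_measurable ((borel \<Otimes>\<^sub>M borel) \<Otimes>\<^sub>M borel)"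
    unfolding f_def by measurable
  have "(\<lambda>p. \<integral>z. f p z \<partial>D) \<in> borel_measurable (borel \<Otimes>\<^sub>M borel)"
    by (rule borel_measurable_lebesgue_integral)
       (subst measurable_cong_sets[OF sets_pair_measure_cong[OF refl S] refl], rule fm)
  then show ?thesis by (simp add: eq)
qed

lemma sets_sphere_measure: "sets (sphere_measure :: (real^'m) measure) = sets (restrict_space borel (sphere 0 1))"
proof -
  have sa: "sigma_algebra (sphere (0::real^'m) 1) (sets (restrict_space borel (sphere (0::real^'m) 1)))"
    using sets.sigma_algebra_axioms[of "restrict_space borel (sphere (0::real^'m) 1)"]
    by (simp add: space_restrict_space)
  have sub: "sets (restrict_space borel (sphere (0::real^'m) 1)) \<subseteq> Pow (sphere 0 1)"
    using sa by (simp add: sigma_algebra_iff2)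
  show ?thesis unfolding sphere_measure_def
    by (simp only: sets_measure_of[OF sub] sigma_algebra.sigma_sets_eq[OF sa])
qed

lemma space_sphere_measure: "space (sphere_measure :: (real^'m) measure) = sphere 0 1"
  unfolding sphere_measure_def by (simp add: space_measure_of_conv)

lemma meas_on_sphere:
  assumes "f \<in> borel_measurable (borel :: (real^'m) measure)"
  shows "f \<in> borel_measurable (sphere_measure :: (real^'m) measure)"
  by (subst measurable_cong_sets[OF sets_sphere_measure refl]) (rule measurable_restrict_space1[OF assms])

lemma C2sq_proj_meas:
  fixes D1 D2 :: "(real ^ 'm) measure"
  assumes S: "sets D1 = sets borel" "sets D2 = sets borel" and F: "finite_measure D1" "finite_measure D2"
  shows "(\<lambda>\<nu>. C2sq (proj D1 \<nu>) (proj D2 \<nu>)) \<in> borel_measurable borel"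
proof -
  note c1 = cdf_proj_meas[OF S(1) F(1)] and c2 = cdf_proj_meas[OF S(2) F(2)]
  show ?thesis unfolding C2sq_def
  proof (rule lborel.borel_measurable_lebesgue_integral)
    have "(\<lambda>p::((real^'m) \<times> real). (cdf (proj D1 (fst p)) (snd p) - cdf (proj D2 (fst p)) (snd p))\<^sup>2)
       \<in> borel_measurable (borel \<Otimes>\<^sub>M borel)"
      by (intro borel_measurable_power borel_measurable_diff c1 c2)
    then show "(\<lambda>(\<nu>, x). (cdf (proj D1 \<nu>) x - cdf (proj D2 \<nu>) x)\<^sup>2) \<in> borel_measurable (borel \<Otimes>\<^sub>M lborel)"
      by (subst measurable_cong_sets[OF sets_pair_measure_cong[OF refl sets_lborel] refl]) (simp add: split_beta')
  qed
qed

lemma sphere_finite: "emeasure (sphere_measure :: (real^'m) measure) (sphere 0 1) < \<infinity>"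
proof -
  let ?C = "{t *\<^sub>R x | t x. t \<in> {0<..1} \<and> x \<in> sphere (0::real^'m) 1}"
  have "?C \<subseteq> cball 0 1"
  proof
    fix z assume "z \<in> ?C"
    then obtain t x where "z = t *\<^sub>R x" "t \<in> {0<..1}" "norm x = 1" by auto
    then show "z \<in> cball 0 1" by (simp add: norm_scaleR)
  qed
  then have "emeasure lborel ?C \<le> emeasure lborel (cball (0::real^'m) 1)"
    by (intro emeasure_mono) auto
  also have "\<dots> < \<infinity>" by (simp add: emeasure_cball)
  finally have "emeasure lborel ?C < \<infinity>" .
  then have "ennreal (real CARD('m)) * emeasure lborel ?C < \<infinity>"
    by (simp add: ennreal_mult_less_top)
  then show ?thesis
    unfolding sphere_measure_def emeasure_measure_of_conv by (simp split: if_split)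
qed

lemma finite_sphere: "finite_measure (sphere_measure :: (real^'m) measure)"
  by (rule finite_measureI) (use sphere_finite in \<open>simp add: space_sphere_measure less_top\<close>)

lemma conv_cdf:
  fixes a x :: "'s \<Rightarrow> real"
  assumes P: "prob_space M" and I: "prob_space.indep_var M borel a borel x"
  shows "cdf (distr M borel (\<lambda>\<omega>. a \<omega> + x \<omega>)) t = (\<integral>s. cdf (distr M borel x) (t - s) \<partial>distr M borel a)"
proof -
  interpret prob_space M by fact
  have am[measurable]: "a \<in> borel_measurable M" and xm[measurable]: "x \<in> borel_measurable M"
    using indep_var_rv1[OF I] indep_var_rv2[OF I] by auto
  let ?Da = "distr M borel a" and ?Dx = "distr M borel x"
  interpret Da: prob_space ?Da by (rule prob_space_distr) simp
  interpret Dx: prob_space ?Dx by (rule prob_space_distr) simp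
  have joint: "?Da \<Otimes>\<^sub>M ?Dx = distr M (borel \<Otimes>\<^sub>M borel) (\<lambda>\<omega>. (a \<omega>, x \<omega>))"
    using I by (simp add: indep_var_distribution_eq)
  define B where "B = {p::real\<times>real. fst p + snd p \<le> t}"
  have "{p\<in>space (borel \<Otimes>\<^sub>M borel). fst p + snd p \<le> (t::real)} \<in> sets (borel \<Otimes>\<^sub>M borel)"
    by measurable
  then have Bm: "B \<in> sets (borel \<Otimes>\<^sub>M borel)" unfolding B_def by (simp add: space_pair_measure)
  have Bm': "B \<in> sets (?Da \<Otimes>\<^sub>M ?Dx)" using Bm by simp
  have "cdf (distr M borel (\<lambda>\<omega>. a \<omega> + x \<omega>)) t = measure M {\<omega>\<in>space M. a \<omega> + x \<omega> \<le> t}"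
    by (simp add: cdf_distr)
  also have "\<dots> = measure (distr M (borel \<Otimes>\<^sub>M borel) (\<lambda>\<omega>. (a \<omega>, x \<omega>))) B"
    using Bm by (subst measure_distr) (auto simp: B_def intro!: arg_cong[where f="measure M"])
  also have "\<dots> = measure (?Da \<Otimes>\<^sub>M ?Dx) B" by (simp add: joint)
  also have "\<dots> = enn2real (\<integral>\<^sup>+s. emeasure ?Dx (Pair s -` B) \<partial>?Da)"
    by (simp add: measure_def Dx.emeasure_pair_measure_alt[OF Bm'])
  also have "(\<integral>\<^sup>+s. emeasure ?Dx (Pair s -` B) \<partial>?Da) = (\<integral>\<^sup>+s. ennreal (cdf ?Dx (t - s)) \<partial>?Da)"
  proof (intro nn_integral_cong)
    fix s
    have "Pair s -` B = {..t - s}" by (auto simp: B_def)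
    then show "emeasure ?Dx (Pair s -` B) = ennreal (cdf ?Dx (t - s))"
      by (simp add: cdf_def Dx.emeasure_eq_measure)
  qed
  also have "\<dots> = ennreal (\<integral>s. cdf ?Dx (t - s) \<partial>?Da)"
  proof (rule nn_integral_eq_integral)
    have cm: "cdf ?Dx \<in> borel_measurable borel" by (rule cdf_distr_meas[OF P xm])
    show "integrable ?Da (\<lambda>s. cdf ?Dx (t - s))"
      by (rule Da.integrable_const_bound[where B=1])
         (use cdf_distr_bounds[OF P xm] cm in auto)
    show "AE s in ?Da. 0 \<le> cdf ?Dx (t - s)" using cdf_distr_bounds[OF P xm] by auto
  qed
  also have "enn2real \<dots> = (\<integral>s. cdf ?Dx (t - s) \<partial>?Da)"
    by (rule enn2real_ennreal) (use cdf_distr_bounds[OF P xm] in \<open>auto intro: integral_nonneg_AE\<close>)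
  finally show ?thesis .
qed

lemma C2_indep:
  fixes a x y :: "'s \<Rightarrow> real"
  assumes P: "prob_space M" and Ix: "prob_space.indep_var M borel a borel x"
    and Iy: "prob_space.indep_var M borel a borel y"
    and ix: "integrable M x" and iy: "integrable M y"
  shows "C2sq (distr M borel (\<lambda>\<omega>. a \<omega> + x \<omega>)) (distr M borel (\<lambda>\<omega>. a \<omega> + y \<omega>))
       \<le> C2sq (distr M borel x) (distr M borel y)"
proof -
  interpret prob_space M by fact
  have am[measurable]: "a \<in> borel_measurable M" and xm[measurable]: "x \<in> borel_measurable M"
    and ym[measurable]: "y \<in> borel_measurable M"
    using indep_var_rv1[OF Ix] indep_var_rv2[OF Ix] indep_var_rv2[OF Iy] by auto
  let ?Da = "distr M borel a"
  interpret Da: prob_space ?Da by (rule prob_space_distr) simp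
  interpret PS: pair_sigma_finite lborel ?Da
    unfolding pair_sigma_finite_def using lborel.sigma_finite_measure_axioms Da.sigma_finite_measure_axioms by blast
  define Fx where "Fx = cdf (distr M borel x)"
  define Fy where "Fy = cdf (distr M borel y)"
  define G where "G = (\<lambda>u. Fx u - Fy u)"
  have Fxm[measurable]: "Fx \<in> borel_measurable borel" unfolding Fx_def by (rule cdf_distr_meas[OF P xm])
  have Fym[measurable]: "Fy \<in> borel_measurable borel" unfolding Fy_def by (rule cdf_distr_meas[OF P ym])
  have Gm[measurable]: "G \<in> borel_measurable borel" unfolding G_def by measurable
  have Gb: "\<bar>G u\<bar> \<le> 1" for u
    using cdf_distr_bounds[OF P xm, of u] cdf_distr_bounds[OF P ym, of u] by (auto simp: G_def Fx_def Fy_def)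
  have intF: "integrable ?Da (\<lambda>s. F (t - s))" if "F \<in> borel_measurable borel" "\<And>u. \<bar>F u\<bar> \<le> 1" for F :: "real \<Rightarrow> real" and t :: real
    by (rule Da.integrable_const_bound[where B=1]) (use that in auto)
  have G2b: "\<bar>(G u)\<^sup>2\<bar> \<le> 1" for u
    using power_le_one[OF abs_ge_zero Gb[of u], of 2] by simp
  define d where "d = (\<lambda>t. cdf (distr M borel (\<lambda>\<omega>. a \<omega> + x \<omega>)) t - cdf (distr M borel (\<lambda>\<omega>. a \<omega> + y \<omega>)) t)"
  have dm[measurable]: "d \<in> borel_measurable borel"
    unfolding d_def by (intro borel_measurable_diff cdf_distr_meas[OF P]) auto
  have d_eq: "d t = (\<integral>s. G (t - s) \<partial>?Da)" for t
  proof -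
    have i1: "integrable ?Da (\<lambda>s. Fx (t - s))"
      by (rule intF[OF Fxm]) (use cdf_distr_bounds[OF P xm] in \<open>auto simp: Fx_def abs_le_iff\<close>)
    have i2: "integrable ?Da (\<lambda>s. Fy (t - s))"
      by (rule intF[OF Fym]) (use cdf_distr_bounds[OF P ym] in \<open>auto simp: Fy_def abs_le_iff\<close>)
    have "d t = (\<integral>s. Fx (t - s) \<partial>?Da) - (\<integral>s. Fy (t - s) \<partial>?Da)"
      unfolding d_def conv_cdf[OF P Ix] conv_cdf[OF P Iy] Fx_def Fy_def ..
    also have "\<dots> = (\<integral>s. G (t - s) \<partial>?Da)"
      unfolding G_def using i1 i2 by simp
    finally show ?thesis .
  qed
  have jen: "(d t)\<^sup>2 \<le> (\<integral>s. (G (t - s))\<^sup>2 \<partial>?Da)" for t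
  proof -
    have i1: "integrable ?Da (\<lambda>s. G (t - s))" by (rule intF) (use Gb in auto)
    have i2: "integrable ?Da (\<lambda>s. (G (t - s))\<^sup>2)" by (rule intF[of "\<lambda>u. (G u)\<^sup>2"]) (use G2b in auto)
    show ?thesis unfolding d_eq
      by (rule Da.jensens_inequality[where I=UNIV and q=power2, OF i1 _ _ i2 convex_power2]) auto
  qed
  have K: "(\<integral>\<^sup>+u. ennreal ((G u)\<^sup>2) \<partial>lborel) = ennreal (C2sq (distr M borel x) (distr M borel y))"
  proof -
    have "integrable lborel (\<lambda>u. (G u)\<^sup>2)"
      unfolding G_def Fx_def Fy_def by (rule L1_diff(4)[OF P xm ix P ym iy])
    then show ?thesis unfolding C2sq_def G_def Fx_def Fy_def
      by (intro nn_integral_eq_integral) auto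
  qed
  have "(\<integral>\<^sup>+t. ennreal ((d t)\<^sup>2) \<partial>lborel) \<le> (\<integral>\<^sup>+t. (\<integral>\<^sup>+s. ennreal ((G (t - s))\<^sup>2) \<partial>?Da) \<partial>lborel)"
  proof (intro nn_integral_mono)
    fix t
    have "(\<integral>\<^sup>+s. ennreal ((G (t - s))\<^sup>2) \<partial>?Da) = ennreal (\<integral>s. (G (t - s))\<^sup>2 \<partial>?Da)"
      by (rule nn_integral_eq_integral) (auto intro: intF[of "\<lambda>u. (G u)\<^sup>2"] G2b)
    then show "ennreal ((d t)\<^sup>2) \<le> (\<integral>\<^sup>+s. ennreal ((G (t - s))\<^sup>2) \<partial>?Da)"
      using jen[of t] by (simp add: ennreal_leI)
  qed
  also have "\<dots> = (\<integral>\<^sup>+s. (\<integral>\<^sup>+t. ennreal ((G (t - s))\<^sup>2) \<partial>lborel) \<partial>?Da)"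
  proof (rule PS.Fubini'[symmetric])
    show "(\<lambda>(t, s). ennreal ((G (t - s))\<^sup>2)) \<in> borel_measurable (lborel \<Otimes>\<^sub>M ?Da)"
      by measurable
  qed
  also have "\<dots> = (\<integral>\<^sup>+s. (\<integral>\<^sup>+u. ennreal ((G u)\<^sup>2) \<partial>lborel) \<partial>?Da)"
  proof (rule nn_integral_cong)
    fix s :: real
    show "(\<integral>\<^sup>+t. ennreal ((G (t - s))\<^sup>2) \<partial>lborel) = (\<integral>\<^sup>+u. ennreal ((G u)\<^sup>2) \<partial>lborel)"
      using nn_integral_real_affine[of "\<lambda>u. ennreal ((G u)\<^sup>2)" 1 "-s"] by simp
  qed
  also have "\<dots> = ennreal (C2sq (distr M borel x) (distr M borel y))"
    using Da.emeasure_space_1 by (simp add: K)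
  finally have le: "(\<integral>\<^sup>+t. ennreal ((d t)\<^sup>2) \<partial>lborel) \<le> ennreal (C2sq (distr M borel x) (distr M borel y))" .
  have "C2sq (distr M borel (\<lambda>\<omega>. a \<omega> + x \<omega>)) (distr M borel (\<lambda>\<omega>. a \<omega> + y \<omega>))
      = enn2real (\<integral>\<^sup>+t. ennreal ((d t)\<^sup>2) \<partial>lborel)"
  proof -
    have "C2sq (distr M borel (\<lambda>\<omega>. a \<omega> + x \<omega>)) (distr M borel (\<lambda>\<omega>. a \<omega> + y \<omega>))
        = (\<integral>t. (d t)\<^sup>2 \<partial>lborel)" unfolding C2sq_def d_def ..
    also have "\<dots> = enn2real (\<integral>\<^sup>+t. ennreal ((d t)\<^sup>2) \<partial>lborel)"
      by (rule integral_eq_nn_integral) auto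
    finally show ?thesis .
  qed
  also have "\<dots> \<le> C2sq (distr M borel x) (distr M borel y)"
    using le L1_diff(6)[OF P xm ix P ym iy]
    by (metis enn2real_ennreal enn2real_mono ennreal_less_top)
  finally show ?thesis .
qed

lemma E_abs_inner_le:
  fixes X :: "'s \<Rightarrow> real ^ 'm"
  assumes "integrable M (\<lambda>\<omega>. norm (X \<omega>))" "X \<in> borel_measurable M" "norm \<nu> = 1"
  shows "(\<integral>\<omega>. \<bar>X \<omega> \<bullet> \<nu>\<bar> \<partial>M) \<le> (\<integral>\<omega>. norm (X \<omega>) \<partial>M)"
proof (rule integral_mono)
  have "integrable M X" using integrable_norm_iff[OF assms(2)] assms(1) by simp
  then show "integrable M (\<lambda>\<omega>. \<bar>X \<omega> \<bullet> \<nu>\<bar>)" by (intro integrable_abs integrable_inner_left)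
  show "integrable M (\<lambda>\<omega>. norm (X \<omega>))" by fact
  fix \<omega> show "\<bar>X \<omega> \<bullet> \<nu>\<bar> \<le> norm (X \<omega>)"
    using Cauchy_Schwarz_ineq2[of "X \<omega>" \<nu>] assms(3) by (simp only: mult_1_right)
qed

lemma part1:
  fixes X Y A :: "'s \<Rightarrow> real ^ 'm"
  assumes P: "prob_space M" and [measurable]: "X \<in> borel_measurable M" "Y \<in> borel_measurable M" "A \<in> borel_measurable M"
    and iX: "integrable M (\<lambda>\<omega>. norm (X \<omega>))" and iY: "integrable M (\<lambda>\<omega>. norm (Y \<omega>))"
    and IX: "prob_space.indep_var M borel A borel X" and IY: "prob_space.indep_var M borel A borel Y"
  shows "S2sq (distr M borel (\<lambda>\<omega>. A \<omega> + X \<omega>)) (distr M borel (\<lambda>\<omega>. A \<omega> + Y \<omega>))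
          \<le> S2sq (distr M borel X) (distr M borel Y)"
proof -
  interpret prob_space M by fact
  interpret S: finite_measure "sphere_measure :: (real^'m) measure" by (rule finite_sphere)
  have iX': "integrable M X" using integrable_norm_iff[of X M] iX by simp
  have iY': "integrable M Y" using integrable_norm_iff[of Y M] iY by simp
  define h1 where "h1 = (\<lambda>\<nu>. C2sq (proj (distr M borel (\<lambda>\<omega>. A \<omega> + X \<omega>)) \<nu>) (proj (distr M borel (\<lambda>\<omega>. A \<omega> + Y \<omega>)) \<nu>))"
  define h2 where "h2 = (\<lambda>\<nu>. C2sq (proj (distr M borel X) \<nu>) (proj (distr M borel Y) \<nu>))"
  have h2e: "h2 \<nu> = C2sq (distr M borel (\<lambda>\<omega>. X \<omega> \<bullet> \<nu>)) (distr M borel (\<lambda>\<omega>. Y \<omega> \<bullet> \<nu>))" for \<nu>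
    unfolding h2_def by (simp add: proj_distr)
  have le: "h1 \<nu> \<le> h2 \<nu>" for \<nu>
  proof -
    have h1e: "h1 \<nu> = C2sq (distr M borel (\<lambda>\<omega>. A \<omega> \<bullet> \<nu> + X \<omega> \<bullet> \<nu>)) (distr M borel (\<lambda>\<omega>. A \<omega> \<bullet> \<nu> + Y \<omega> \<bullet> \<nu>))"
      unfolding h1_def by (simp add: proj_distr inner_add_left)
    have m: "(\<lambda>z::real^'m. z \<bullet> \<nu>) \<in> borel_measurable borel" by measurable
    have ix: "indep_var borel (\<lambda>\<omega>. A \<omega> \<bullet> \<nu>) borel (\<lambda>\<omega>. X \<omega> \<bullet> \<nu>)"
      using indep_var_compose[OF IX m m] by (simp add: comp_def)
    have iy: "indep_var borel (\<lambda>\<omega>. A \<omega> \<bullet> \<nu>) borel (\<lambda>\<omega>. Y \<omega> \<bullet> \<nu>)"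
      using indep_var_compose[OF IY m m] by (simp add: comp_def)
    show ?thesis unfolding h1e h2e
      by (rule C2_indep[OF P ix iy]) (use iX' iY' in auto)
  qed
  have nn: "0 \<le> h1 \<nu>" for \<nu>
    unfolding h1_def C2sq_def by simp
  have bd: "h2 \<nu> \<le> (\<integral>\<omega>. norm (X \<omega>) \<partial>M) + (\<integral>\<omega>. norm (Y \<omega>) \<partial>M)" if "norm \<nu> = 1" for \<nu>
  proof -
    have "h2 \<nu> \<le> (\<integral>\<omega>. \<bar>X \<omega> \<bullet> \<nu>\<bar> \<partial>M) + (\<integral>\<omega>. \<bar>Y \<omega> \<bullet> \<nu>\<bar> \<partial>M)"
      unfolding h2e by (rule L1_diff(5)[OF P _ _ P]) (use iX' iY' in auto)
    then show ?thesis using E_abs_inner_le[OF iX _ that] E_abs_inner_le[OF iY _ that] by simp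
  qed
  have h2m: "h2 \<in> borel_measurable borel"
    unfolding h2_def
    by (rule C2sq_proj_meas) (auto intro!: prob_space.finite_measure prob_space_distr)
  have ih2: "integrable sphere_measure h2"
  proof (rule S.integrable_const_bound)
    show "h2 \<in> borel_measurable sphere_measure" by (rule meas_on_sphere[OF h2m])
    show "AE \<nu> in sphere_measure. norm (h2 \<nu>) \<le> (\<integral>\<omega>. norm (X \<omega>) \<partial>M) + (\<integral>\<omega>. norm (Y \<omega>) \<partial>M)"
    proof (rule AE_I2)
      fix \<nu> :: "real^'m" assume "\<nu> \<in> space sphere_measure"
      then have "norm \<nu> = 1" by (simp add: space_sphere_measure)
      then show "norm (h2 \<nu>) \<le> (\<integral>\<omega>. norm (X \<omega>) \<partial>M) + (\<integral>\<omega>. norm (Y \<omega>) \<partial>M)"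
        using bd[of \<nu>] le[of \<nu>] nn[of \<nu>] by simp
    qed
  qed
  have "(\<integral>\<nu>. h1 \<nu> \<partial>sphere_measure) \<le> (\<integral>\<nu>. h2 \<nu> \<partial>sphere_measure)"
    using integral_mono'[OF ih2, of h1] le nn order_trans[OF nn le] by blast
  then show ?thesis unfolding S2sq_def h1_def h2_def .
qed

lemma meas_ucm[measurable]: "f \<in> borel_measurable (uniform_count_measure A)"
  by (subst measurable_cong_sets[OF sets_uniform_count_measure_count_space refl]) simp

lemma ennreal_nat_div: "(r::nat) > 0 \<Longrightarrow> (of_nat n / of_nat r :: ennreal) = ennreal (real n / real r)"
  by (metis divide_ennreal ennreal_of_nat_eq_real_of_nat of_nat_0_le_iff of_nat_0_less_iff)

lemma emp_eq:
  fixes xs :: "nat \<Rightarrow> real ^ 'm"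
  assumes r: "r > 0"
  shows "empirical r xs = distr (uniform_count_measure {..<r}) borel xs"
proof -
  let ?U = "uniform_count_measure {..<r}"
  let ?R = "distr ?U borel xs"
  have "?R = measure_of (space ?R) (sets ?R) (emeasure ?R)" by (rule measure_of_of_measure[symmetric])
  also have "\<dots> = measure_of UNIV (sets borel) (emeasure ?R)" by simp
  also have "\<dots> = empirical r xs"
    unfolding empirical_def
  proof (rule measure_of_eq)
    show "sets borel \<subseteq> Pow (UNIV :: (real^'m) set)" by auto
    fix a assume "a \<in> sigma_sets (UNIV :: (real^'m) set) (sets borel)"
    then have a: "a \<in> sets borel" by (metis sets.sigma_sets_eq space_borel)
    have "emeasure ?R a = emeasure ?U (xs -` a \<inter> space ?U)"
      using a by (simp add: emeasure_distr)
    also have "\<dots> = ennreal (real (card {i \<in> {..<r}. xs i \<in> a}) / real r)"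
    proof -
      have "xs -` a \<inter> space ?U = {i \<in> {..<r}. xs i \<in> a}" by (auto simp: space_uniform_count_measure)
      moreover have "emeasure ?U {i \<in> {..<r}. xs i \<in> a} = ennreal (real (card {i \<in> {..<r}. xs i \<in> a}) / real (card {..<r}))"
        by (rule emeasure_uniform_count_measure) auto
      ultimately show ?thesis by simp
    qed
    finally show "emeasure ?R a = ennreal (real (card {i \<in> {..<r}. xs i \<in> a}) / real r)" .
  qed
  finally show ?thesis ..
qed

lemma proj_emp:
  fixes xs :: "nat \<Rightarrow> real ^ 'm"
  assumes r: "r > 0"
  shows "proj (empirical r xs) \<nu> = distr (uniform_count_measure {..<r}) borel (\<lambda>i. xs i \<bullet> \<nu>)"
  unfolding emp_eq[OF r] proj_def by (subst distr_distr) (auto simp: comp_def)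

definition ecdf :: "nat \<Rightarrow> (nat \<Rightarrow> real ^ 'm) \<Rightarrow> real ^ 'm \<Rightarrow> real \<Rightarrow> real" where
  "ecdf r xs \<nu> x = (\<Sum>i<r. if xs i \<bullet> \<nu> \<le> x then 1 else 0) / real r"

lemma cdf_emp:
  fixes xs :: "nat \<Rightarrow> real ^ 'm"
  assumes r: "r > 0"
  shows "cdf (proj (empirical r xs) \<nu>) x = ecdf r xs \<nu> x"
proof -
  have "cdf (proj (empirical r xs) \<nu>) x = measure (uniform_count_measure {..<r}) {i \<in> {..<r}. xs i \<bullet> \<nu> \<le> x}"
    unfolding proj_emp[OF r] by (subst cdf_distr) (auto simp: space_uniform_count_measure)
  also have "\<dots> = real (card {i \<in> {..<r}. xs i \<bullet> \<nu> \<le> x}) / real r"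
    by (subst measure_uniform_count_measure) auto
  also have "real (card {i \<in> {..<r}. xs i \<bullet> \<nu> \<le> x}) = (\<Sum>i<r. if xs i \<bullet> \<nu> \<le> x then 1 else 0)"
    by (simp only: real_of_card sum.inter_filter[OF finite_lessThan])
  finally show ?thesis unfolding ecdf_def .
qed

lemma ecdf_bounds: "0 \<le> ecdf r xs \<nu> x" "ecdf r xs \<nu> x \<le> 1"
proof -
  have "(\<Sum>i<r. if xs i \<bullet> \<nu> \<le> x then 1 else 0) \<le> (\<Sum>i<r. 1::real)"
    by (intro sum_mono) auto
  then show "ecdf r xs \<nu> x \<le> 1" unfolding ecdf_def
    by (cases "r = 0") (auto simp: divide_le_eq)
  show "0 \<le> ecdf r xs \<nu> x" unfolding ecdf_def by (auto intro!: sum_nonneg divide_nonneg_nonneg)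
qed

lemma emp_E_abs:
  fixes xs :: "nat \<Rightarrow> real ^ 'm"
  assumes r: "r > 0"
  shows "(\<integral>i. \<bar>xs i \<bullet> \<nu>\<bar> \<partial>uniform_count_measure {..<r}) = (\<Sum>i<r. \<bar>xs i \<bullet> \<nu>\<bar>) / real r"
  by (simp add: integral_uniform_count_measure)

lemma integrable_ucm: "finite A \<Longrightarrow> integrable (uniform_count_measure A) (f :: _ \<Rightarrow> real)"
  unfolding uniform_count_measure_def
  by (rule integrable_point_measure_finite) auto

lemma cdf_proj_comp[measurable]:
  fixes D :: "(real ^ 'm) measure"
  assumes S: "sets D = sets borel" and F: "finite_measure D"
    and V: "V \<in> borel_measurable N" and T: "T \<in> borel_measurable N"
  shows "(\<lambda>w. cdf (proj D (V w)) (T w)) \<in> borel_measurable N"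
proof -
  have "(\<lambda>w. (V w, T w)) \<in> measurable N (borel \<Otimes>\<^sub>M borel)" using V T by measurable
  from measurable_compose[OF this cdf_proj_meas[OF S F]] show ?thesis by simp
qed

lemma ecdf_meas:
  fixes X :: "'w \<Rightarrow> nat \<Rightarrow> real ^ 'm"
  assumes X: "\<And>i. i < r \<Longrightarrow> (\<lambda>w. X w i) \<in> borel_measurable N"
    and V: "V \<in> borel_measurable N" and T: "T \<in> borel_measurable N"
  shows "(\<lambda>w. ecdf r (X w) (V w) (T w)) \<in> borel_measurable N"
  unfolding ecdf_def
proof (intro borel_measurable_divide borel_measurable_sum borel_measurable_const)
  fix i assume "i \<in> {..<r}"
  then have [measurable]: "(\<lambda>w. X w i) \<in> borel_measurable N" using X by simp
  note [measurable] = V T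
  show "(\<lambda>w. if X w i \<bullet> V w \<le> T w then 1 else 0 :: real) \<in> borel_measurable N" by measurable
qed

lemma iid_prob: "prob_space P \<Longrightarrow> prob_space (iid_samples r P)"
  unfolding iid_samples_def by (rule prob_space_PiM) auto

lemma iid_comp_meas:
  assumes "sets P = sets borel" "i < r"
  shows "(\<lambda>xs. xs i) \<in> borel_measurable (iid_samples r P)"
  unfolding iid_samples_def
  using measurable_component_singleton[of i "{..<r}" "\<lambda>_. P"] assms
  unfolding measurable_cong_sets[OF refl assms(1)] by simp

lemma iid_comp_integral:
  fixes f :: "real ^ 'm \<Rightarrow> real"
  assumes "prob_space P" "i < r" "f \<in> borel_measurable P"
  shows "(\<integral>xs. f (xs i) \<partial>iid_samples r P) = (\<integral>z. f z \<partial>P)"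
    and "integrable P f \<Longrightarrow> integrable (iid_samples r P) (\<lambda>xs. f (xs i))"
proof -
  have d: "distr (iid_samples r P) P (\<lambda>xs. xs i) = P"
    unfolding iid_samples_def by (rule distr_PiM_component) (use assms in auto)
  have m: "(\<lambda>xs. xs i) \<in> measurable (iid_samples r P) P"
    unfolding iid_samples_def by (rule measurable_component_singleton) (use assms in auto)
  show "(\<integral>xs. f (xs i) \<partial>iid_samples r P) = (\<integral>z. f z \<partial>P)"
    using integral_distr[OF m assms(3)] d by simp
  show "integrable P f \<Longrightarrow> integrable (iid_samples r P) (\<lambda>xs. f (xs i))"
    using integrable_distr_eq[OF m assms(3)] d by simp
qed

lemma E_ecdf:
  fixes P :: "(real ^ 'm) measure"
  assumes P: "prob_space P" "sets P = sets borel" and r: "r > 0"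
  shows "(\<integral>xs. ecdf r xs \<nu> x \<partial>iid_samples r P) = cdf (proj P \<nu>) x"
    and "integrable (iid_samples r P) (\<lambda>xs. ecdf r xs \<nu> x)"
proof -
  let ?f = "\<lambda>z::real^'m. if z \<bullet> \<nu> \<le> x then 1 else 0 :: real"
  have fm: "?f \<in> borel_measurable P" unfolding measurable_cong_sets[OF P(2) refl] by measurable
  interpret Pp: prob_space P by fact
  have fi: "integrable P ?f"
  proof (rule Pp.integrable_const_bound[where B=1])
    show "AE z in P. norm (?f z) \<le> 1" by (rule AE_I2) simp
  qed (rule fm)
  have ii: "integrable (iid_samples r P) (\<lambda>xs. ?f (xs i))" if "i \<in> {..<r}" for i
    using iid_comp_integral(2)[OF P(1) _ fm fi] that by simp
  have "(\<integral>xs. ecdf r xs \<nu> x \<partial>iid_samples r P) = (\<integral>xs. (\<Sum>i<r. ?f (xs i)) \<partial>iid_samples r P) / real r"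
    unfolding ecdf_def by simp
  also have "\<dots> = (\<Sum>i<r. \<integral>xs. ?f (xs i) \<partial>iid_samples r P) / real r"
    by (subst Bochner_Integration.integral_sum) (use ii in auto)
  also have "\<dots> = (\<Sum>i<r. \<integral>z. ?f z \<partial>P) / real r"
    using iid_comp_integral(1)[OF P(1) _ fm] by simp
  also have "\<dots> = (\<integral>z. ?f z \<partial>P)" using r by simp
  also have "\<dots> = measure P {z. z \<bullet> \<nu> \<le> x}"
  proof -
    have "(\<integral>z. ?f z \<partial>P) = (\<integral>z. indicator {z. z \<bullet> \<nu> \<le> x} z \<partial>P)"
      by (intro Bochner_Integration.integral_cong) (auto simp: indicator_def)
    also have "\<dots> = measure P {z. z \<bullet> \<nu> \<le> x}"
    proof -
      have mz: "{z::real^'m. z \<bullet> \<nu> \<le> x} \<in> sets P" unfolding P(2) by measurable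
      then show ?thesis by (simp add: Pp.emeasure_eq_measure)
    qed
    finally show ?thesis .
  qed
  also have "\<dots> = cdf (proj P \<nu>) x" by (simp add: cdf_proj[OF P(2)])
  finally show "(\<integral>xs. ecdf r xs \<nu> x \<partial>iid_samples r P) = cdf (proj P \<nu>) x" .
  show "integrable (iid_samples r P) (\<lambda>xs. ecdf r xs \<nu> x)"
    unfolding ecdf_def using ii by (intro integrable_divide integrable_sum) auto
qed

lemma C2emp_meas:
  fixes D :: "(real ^ 'm) measure" and X :: "'w \<Rightarrow> nat \<Rightarrow> real ^ 'm"
  assumes S: "sets D = sets borel" and F: "finite_measure D" and r: "r > 0"
    and X: "\<And>i. i < r \<Longrightarrow> (\<lambda>w. X w i) \<in> borel_measurable N"
    and V: "V \<in> borel_measurable N"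
  shows "(\<lambda>w. C2sq (proj D (V w)) (proj (empirical r (X w)) (V w))) \<in> borel_measurable N"
proof -
  have eq: "C2sq (proj D (V w)) (proj (empirical r (X w)) (V w)) = (\<integral>x. (cdf (proj D (V w)) x - ecdf r (X w) (V w) x)\<^sup>2 \<partial>lborel)" for w
    unfolding C2sq_def cdf_emp[OF r] ..
  have "(\<lambda>p. (cdf (proj D (V (fst p))) (snd p) - ecdf r (X (fst p)) (V (fst p)) (snd p))\<^sup>2) \<in> borel_measurable (N \<Otimes>\<^sub>M lborel)"
  proof (intro borel_measurable_power borel_measurable_diff)
    have Vf: "(\<lambda>p. V (fst p)) \<in> borel_measurable (N \<Otimes>\<^sub>M lborel)" using V by measurable
    have Tf: "(\<lambda>p. snd p) \<in> borel_measurable (N \<Otimes>\<^sub>M lborel)" by measurable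
    show "(\<lambda>p. cdf (proj D (V (fst p))) (snd p)) \<in> borel_measurable (N \<Otimes>\<^sub>M lborel)"
      by (rule cdf_proj_comp[OF S F Vf Tf])
    show "(\<lambda>p. ecdf r (X (fst p)) (V (fst p)) (snd p)) \<in> borel_measurable (N \<Otimes>\<^sub>M lborel)"
    proof (rule ecdf_meas[OF _ Vf Tf])
      fix i assume "i < r"
      with X have [measurable]: "(\<lambda>w. X w i) \<in> borel_measurable N" .
      show "(\<lambda>p. X (fst p) i) \<in> borel_measurable (N \<Otimes>\<^sub>M lborel)" by measurable
    qed
  qed
  then have "(\<lambda>w. \<integral>x. (cdf (proj D (V w)) x - ecdf r (X w) (V w) x)\<^sup>2 \<partial>lborel) \<in> borel_measurable N"
    by (intro lborel.borel_measurable_lebesgue_integral) (simp add: split_beta')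
  then show ?thesis by (simp add: eq)
qed

lemma fm_distD:
  assumes "fm_dist D"
  shows "prob_space D" "sets D = sets borel" "finite_measure D"
    "integrable D (\<lambda>z. z \<bullet> \<nu>)" "integrable D (\<lambda>z. \<bar>z \<bullet> \<nu>\<bar>)"
    "(\<lambda>z. z \<bullet> \<nu>) \<in> borel_measurable D" "integrable D (\<lambda>z. norm z)"
proof -
  show p: "prob_space D" and s: "sets D = sets borel" and n: "integrable D (\<lambda>z. norm z)"
    using assms unfolding fm_dist_def by auto
  show "finite_measure D" using p by (rule prob_space.finite_measure)
  have m: "(\<lambda>z. z) \<in> borel_measurable D" unfolding measurable_cong_sets[OF s refl] by simp
  have i: "integrable D (\<lambda>z. z)" using integrable_norm_iff[OF m] n by simp
  show "integrable D (\<lambda>z. z \<bullet> \<nu>)" using i by (rule integrable_inner_left)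
  then show "integrable D (\<lambda>z. \<bar>z \<bullet> \<nu>\<bar>)" by (rule integrable_abs)
  show "(\<lambda>z. z \<bullet> \<nu>) \<in> borel_measurable D" unfolding measurable_cong_sets[OF s refl] by simp
qed

lemma C2emp_bound:
  fixes D :: "(real ^ 'm) measure"
  assumes fD: "fm_dist D" and r: "r > 0"
  shows "C2sq (proj D \<nu>) (proj (empirical r xs) \<nu>) \<le> (\<integral>z. \<bar>z \<bullet> \<nu>\<bar> \<partial>D) + (\<Sum>i<r. \<bar>xs i \<bullet> \<nu>\<bar>) / real r"
    and "0 \<le> C2sq (proj D \<nu>) (proj (empirical r xs) \<nu>)"
proof -
  have U: "prob_space (uniform_count_measure {..<r})"
    by (rule prob_space_uniform_count_measure) (use r in auto)
  have "C2sq (proj D \<nu>) (proj (empirical r xs) \<nu>)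
     = C2sq (distr D borel (\<lambda>z. z \<bullet> \<nu>)) (distr (uniform_count_measure {..<r}) borel (\<lambda>i. xs i \<bullet> \<nu>))"
    by (subst proj_emp[OF r]) (simp add: proj_def)
  also have "\<dots> \<le> (\<integral>z. \<bar>z \<bullet> \<nu>\<bar> \<partial>D) + (\<integral>i. \<bar>xs i \<bullet> \<nu>\<bar> \<partial>uniform_count_measure {..<r})"
    by (rule L1_diff(5)[OF fm_distD(1)[OF fD] fm_distD(6)[OF fD] fm_distD(4)[OF fD] U meas_ucm integrable_ucm]) simp
  finally show "C2sq (proj D \<nu>) (proj (empirical r xs) \<nu>) \<le> (\<integral>z. \<bar>z \<bullet> \<nu>\<bar> \<partial>D) + (\<Sum>i<r. \<bar>xs i \<bullet> \<nu>\<bar>) / real r"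
    by (simp add: emp_E_abs[OF r])
  show "0 \<le> C2sq (proj D \<nu>) (proj (empirical r xs) \<nu>)" unfolding C2sq_def by simp
qed

lemma iid_abs_int:
  fixes P :: "(real ^ 'm) measure"
  assumes fP: "fm_dist P"
  shows "integrable (iid_samples r P) (\<lambda>xs. (\<Sum>i<r. \<bar>xs i \<bullet> \<nu>\<bar>) / real r)"
proof -
  have "integrable (iid_samples r P) (\<lambda>xs. \<bar>xs i \<bullet> \<nu>\<bar>)" if "i < r" for i
    by (rule iid_comp_integral(2)[OF fm_distD(1)[OF fP] that])
       (use fm_distD(5,6)[OF fP, of \<nu>] in \<open>auto\<close>)
  then show ?thesis by (intro integrable_divide integrable_sum) auto
qed

lemma C2emp_int:
  fixes D P :: "(real ^ 'm) measure"
  assumes fD: "fm_dist D" and fP: "fm_dist P" and r: "r > 0"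
  shows "integrable (iid_samples r P) (\<lambda>xs. C2sq (proj D \<nu>) (proj (empirical r xs) \<nu>))"
proof (rule Bochner_Integration.integrable_bound)
  show "integrable (iid_samples r P) (\<lambda>xs. (\<integral>z. \<bar>z \<bullet> \<nu>\<bar> \<partial>D) + (\<Sum>i<r. \<bar>xs i \<bullet> \<nu>\<bar>) / real r)"
    by (intro Bochner_Integration.integrable_add finite_measure.integrable_const iid_abs_int[OF fP]
        prob_space.finite_measure[OF iid_prob[OF fm_distD(1)[OF fP]]])
  show "(\<lambda>xs. C2sq (proj D \<nu>) (proj (empirical r xs) \<nu>)) \<in> borel_measurable (iid_samples r P)"
    by (rule C2emp_meas[OF fm_distD(2)[OF fD] fm_distD(3)[OF fD] r iid_comp_meas[OF fm_distD(2)[OF fP]]]) simp_all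
  show "AE xs in iid_samples r P. norm (C2sq (proj D \<nu>) (proj (empirical r xs) \<nu>))
       \<le> norm ((\<integral>z. \<bar>z \<bullet> \<nu>\<bar> \<partial>D) + (\<Sum>i<r. \<bar>xs i \<bullet> \<nu>\<bar>) / real r)"
  proof (rule AE_I2)
    fix xs
    have "0 \<le> (\<integral>z. \<bar>z \<bullet> \<nu>\<bar> \<partial>D) + (\<Sum>i<r. \<bar>xs i \<bullet> \<nu>\<bar>) / real r"
      by (intro add_nonneg_nonneg integral_nonneg_AE divide_nonneg_nonneg sum_nonneg) auto
    then show "norm (C2sq (proj D \<nu>) (proj (empirical r xs) \<nu>))
       \<le> norm ((\<integral>z. \<bar>z \<bullet> \<nu>\<bar> \<partial>D) + (\<Sum>i<r. \<bar>xs i \<bullet> \<nu>\<bar>) / real r)"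
      using C2emp_bound[OF fD r, of \<nu> xs] by simp
  qed
qed

lemma integrable_fst_only:
  fixes f :: "'a \<Rightarrow> real"
  assumes M2: "prob_space M2" and S: "sigma_finite_measure M1" and f: "integrable M1 f"
  shows "integrable (M1 \<Otimes>\<^sub>M M2) (\<lambda>p. f (fst p))"
proof -
  interpret M2: prob_space M2 by fact
  interpret PS: pair_sigma_finite M1 M2
    unfolding pair_sigma_finite_def using S M2.sigma_finite_measure_axioms by blast
  have fm[measurable]: "f \<in> borel_measurable M1" using f by auto
  show ?thesis
  proof (rule integrableI_bounded)
    show "(\<lambda>p. f (fst p)) \<in> borel_measurable (M1 \<Otimes>\<^sub>M M2)" by measurable
    have "(\<integral>\<^sup>+p. ennreal (norm (f (fst p))) \<partial>(M1 \<Otimes>\<^sub>M M2)) = (\<integral>\<^sup>+x. (\<integral>\<^sup>+y. ennreal (norm (f x)) \<partial>M2) \<partial>M1)"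
      by (subst M2.nn_integral_fst[symmetric]) auto
    also have "\<dots> = (\<integral>\<^sup>+x. ennreal (norm (f x)) \<partial>M1)"
      using M2.emeasure_space_1 by simp
    also have "\<dots> < \<infinity>" using f by (simp add: integrable_iff_bounded)
    finally show "(\<integral>\<^sup>+p. ennreal (norm (f (fst p))) \<partial>(M1 \<Otimes>\<^sub>M M2)) < \<infinity>" .
  qed
qed

lemma key_nu:
  fixes P Q :: "(real ^ 'm) measure"
  assumes fP: "fm_dist P" and fQ: "fm_dist Q" and r: "r > 0"
  shows "(\<integral>xs. C2sq (proj Q \<nu>) (proj (empirical r xs) \<nu>) \<partial>iid_samples r P)
       = C2sq (proj Q \<nu>) (proj P \<nu>) + (\<integral>xs. C2sq (proj P \<nu>) (proj (empirical r xs) \<nu>) \<partial>iid_samples r P)"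
proof -
  let ?I = "iid_samples r P"
  interpret I: prob_space ?I by (rule iid_prob[OF fm_distD(1)[OF fP]])
  interpret PS: pair_sigma_finite lborel ?I
    unfolding pair_sigma_finite_def using lborel.sigma_finite_measure_axioms I.sigma_finite_measure_axioms by blast
  define a where "a = cdf (proj Q \<nu>)"
  define F where "F = cdf (proj P \<nu>)"
  define e where "e = (\<lambda>xs x. ecdf r xs \<nu> x)"
  have am[measurable]: "a \<in> borel_measurable borel"
    unfolding a_def proj_def by (rule cdf_distr_meas[OF fm_distD(1,6)[OF fQ]])
  have Fm[measurable]: "F \<in> borel_measurable borel"
    unfolding F_def proj_def by (rule cdf_distr_meas[OF fm_distD(1,6)[OF fP]])
  have ab: "0 \<le> a x" "a x \<le> 1" for x
    unfolding a_def proj_def using cdf_distr_bounds[OF fm_distD(1,6)[OF fQ]] by auto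
  have Fb: "0 \<le> F x" "F x \<le> 1" for x
    unfolding F_def proj_def using cdf_distr_bounds[OF fm_distD(1,6)[OF fP]] by auto
  have eb: "0 \<le> e xs x" "e xs x \<le> 1" for xs x
    unfolding e_def using ecdf_bounds by auto
  define g where "g = (\<lambda>p. (a (fst p) - F (fst p)) * (a (fst p) + F (fst p) - 2 * e (snd p) (fst p)))"
  have gm: "g \<in> borel_measurable (lborel \<Otimes>\<^sub>M ?I)"
  proof -
    have em: "(\<lambda>p. ecdf r (snd p) \<nu> (fst p)) \<in> borel_measurable (lborel \<Otimes>\<^sub>M ?I)"
    proof (rule ecdf_meas)
      fix i assume i: "i < r"
      have [measurable]: "(\<lambda>xs. xs i) \<in> borel_measurable ?I" by (rule iid_comp_meas[OF fm_distD(2)[OF fP] i])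
      show "(\<lambda>p. snd p i) \<in> borel_measurable (lborel \<Otimes>\<^sub>M ?I)" by measurable
    qed auto
    show ?thesis unfolding g_def e_def using em by measurable
  qed
  have intAF: "integrable lborel (\<lambda>x. \<bar>a x - F x\<bar>)"
    unfolding a_def F_def proj_def
    by (rule L1_diff(2)[OF fm_distD(1,6,4)[OF fQ] fm_distD(1,6,4)[OF fP]])
  have gint: "integrable (lborel \<Otimes>\<^sub>M ?I) g"
  proof (rule Bochner_Integration.integrable_bound)
    show "integrable (lborel \<Otimes>\<^sub>M ?I) (\<lambda>p. 2 * \<bar>a (fst p) - F (fst p)\<bar>)"
      using integrable_fst_only[OF I.prob_space_axioms lborel.sigma_finite_measure_axioms, of "\<lambda>x. 2 * \<bar>a x - F x\<bar>"] intAF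
      by simp
    show "g \<in> borel_measurable (lborel \<Otimes>\<^sub>M ?I)" by (rule gm)
    show "AE p in lborel \<Otimes>\<^sub>M ?I. norm (g p) \<le> norm (2 * \<bar>a (fst p) - F (fst p)\<bar>)"
    proof (rule AE_I2)
      fix p
      have "\<bar>a (fst p) + F (fst p) - 2 * e (snd p) (fst p)\<bar> \<le> 2"
        using ab[of "fst p"] Fb[of "fst p"] eb[of "snd p" "fst p"] by auto
      then have "\<bar>a (fst p) - F (fst p)\<bar> * \<bar>a (fst p) + F (fst p) - 2 * e (snd p) (fst p)\<bar> \<le> \<bar>a (fst p) - F (fst p)\<bar> * 2"
        by (intro mult_left_mono) auto
      then show "norm (g p) \<le> norm (2 * \<bar>a (fst p) - F (fst p)\<bar>)"
        by (simp add: g_def abs_mult)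
    qed
  qed
  have inner: "(\<integral>xs. g (x, xs) \<partial>?I) = (a x - F x)\<^sup>2" for x
  proof -
    have ie: "integrable ?I (\<lambda>xs. e xs x)" unfolding e_def by (rule E_ecdf(2)[OF fm_distD(1,2)[OF fP] r])
    have Ee: "(\<integral>xs. e xs x \<partial>?I) = F x" unfolding e_def F_def by (rule E_ecdf(1)[OF fm_distD(1,2)[OF fP] r])
    have "(\<integral>xs. g (x, xs) \<partial>?I) = (\<integral>xs. (a x - F x) * (a x + F x) - (2 * (a x - F x)) * e xs x \<partial>?I)"
      unfolding g_def by (intro Bochner_Integration.integral_cong) (auto simp: algebra_simps)
    also have "\<dots> = (a x - F x) * (a x + F x) - (2 * (a x - F x)) * F x"
      using ie by (simp add: Ee I.prob_space)
    also have "\<dots> = (a x - F x)\<^sup>2" by (simp add: power2_eq_square algebra_simps)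
    finally show ?thesis .
  qed
  have sec: "(\<integral>x. g (x, xs) \<partial>lborel) = C2sq (proj Q \<nu>) (proj (empirical r xs) \<nu>) - C2sq (proj P \<nu>) (proj (empirical r xs) \<nu>)" for xs
  proof -
    have U: "prob_space (uniform_count_measure {..<r})"
      by (rule prob_space_uniform_count_measure) (use r in auto)
    have ce: "cdf (distr (uniform_count_measure {..<r}) borel (\<lambda>i. xs i \<bullet> \<nu>)) = e xs"
      using cdf_emp[OF r, of xs \<nu>] unfolding proj_emp[OF r] e_def by auto
    have i1: "integrable lborel (\<lambda>x. (a x - e xs x)\<^sup>2)"
      using L1_diff(4)[OF fm_distD(1,6,4)[OF fQ] U meas_ucm integrable_ucm[of "{..<r}" "\<lambda>i. xs i \<bullet> \<nu>"]]
      unfolding ce a_def proj_def by simp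
    have i2: "integrable lborel (\<lambda>x. (F x - e xs x)\<^sup>2)"
      using L1_diff(4)[OF fm_distD(1,6,4)[OF fP] U meas_ucm integrable_ucm[of "{..<r}" "\<lambda>i. xs i \<bullet> \<nu>"]]
      unfolding ce F_def proj_def by simp
    have "C2sq (proj Q \<nu>) (proj (empirical r xs) \<nu>) - C2sq (proj P \<nu>) (proj (empirical r xs) \<nu>)
        = (\<integral>x. (a x - e xs x)\<^sup>2 \<partial>lborel) - (\<integral>x. (F x - e xs x)\<^sup>2 \<partial>lborel)"
      unfolding C2sq_def cdf_emp[OF r] a_def F_def e_def ..
    also have "\<dots> = (\<integral>x. (a x - e xs x)\<^sup>2 - (F x - e xs x)\<^sup>2 \<partial>lborel)"
      using i1 i2 by simp
    also have "\<dots> = (\<integral>x. g (x, xs) \<partial>lborel)"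
      unfolding g_def by (intro Bochner_Integration.integral_cong) (auto simp: power2_eq_square algebra_simps)
    finally show ?thesis ..
  qed
  have "(\<integral>xs. C2sq (proj Q \<nu>) (proj (empirical r xs) \<nu>) - C2sq (proj P \<nu>) (proj (empirical r xs) \<nu>) \<partial>?I)
      = (\<integral>xs. (\<integral>x. g (x, xs) \<partial>lborel) \<partial>?I)" by (simp add: sec)
  also have "\<dots> = (\<integral>x. (\<integral>xs. g (x, xs) \<partial>?I) \<partial>lborel)"
    using PS.Fubini_integral[of "\<lambda>x xs. g (x, xs)"] gint by simp
  also have "\<dots> = (\<integral>x. (a x - F x)\<^sup>2 \<partial>lborel)" by (simp add: inner)
  also have "\<dots> = C2sq (proj Q \<nu>) (proj P \<nu>)" unfolding C2sq_def a_def F_def ..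
  finally have D: "(\<integral>xs. C2sq (proj Q \<nu>) (proj (empirical r xs) \<nu>) - C2sq (proj P \<nu>) (proj (empirical r xs) \<nu>) \<partial>?I)
      = C2sq (proj Q \<nu>) (proj P \<nu>)" .
  have iQ: "integrable ?I (\<lambda>xs. C2sq (proj Q \<nu>) (proj (empirical r xs) \<nu>))" by (rule C2emp_int[OF fQ fP r])
  have iP: "integrable ?I (\<lambda>xs. C2sq (proj P \<nu>) (proj (empirical r xs) \<nu>))" by (rule C2emp_int[OF fP fP r])
  show ?thesis using D iQ iP by simp
qed

lemma integrable_snd_only:
  fixes h :: "'b \<Rightarrow> real"
  assumes M1: "finite_measure M1" and M2: "sigma_finite_measure M2" and h: "integrable M2 h"
  shows "integrable (M1 \<Otimes>\<^sub>M M2) (\<lambda>p. h (snd p))"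
proof -
  interpret M1: finite_measure M1 by fact
  interpret M2: sigma_finite_measure M2 by fact
  interpret PS: pair_sigma_finite M1 M2
    unfolding pair_sigma_finite_def using M1.sigma_finite_measure_axioms M2.sigma_finite_measure_axioms by blast
  have hm[measurable]: "h \<in> borel_measurable M2" using h by auto
  show ?thesis
  proof (rule integrableI_bounded)
    show "(\<lambda>p. h (snd p)) \<in> borel_measurable (M1 \<Otimes>\<^sub>M M2)" by measurable
    have "(\<integral>\<^sup>+p. ennreal (norm (h (snd p))) \<partial>(M1 \<Otimes>\<^sub>M M2)) = (\<integral>\<^sup>+x. (\<integral>\<^sup>+y. ennreal (norm (h y)) \<partial>M2) \<partial>M1)"
      by (subst M2.nn_integral_fst[symmetric]) auto
    also have "\<dots> = emeasure M1 (space M1) * (\<integral>\<^sup>+y. ennreal (norm (h y)) \<partial>M2)"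
      by (simp add: mult.commute)
    also have "\<dots> < \<infinity>"
    proof -
      have f1: "emeasure M1 (space M1) < \<infinity>" using M1.emeasure_finite by (simp add: less_top[symmetric])
      have f2: "(\<integral>\<^sup>+y. ennreal (norm (h y)) \<partial>M2) < \<infinity>" using h by (simp add: integrable_iff_bounded)
      show ?thesis using f1 f2 by (simp add: ennreal_mult_less_top)
    qed
    finally show "(\<integral>\<^sup>+p. ennreal (norm (h (snd p))) \<partial>(M1 \<Otimes>\<^sub>M M2)) < \<infinity>" .
  qed
qed

lemma C2emp_bound2:
  fixes D :: "(real ^ 'm) measure"
  assumes fD: "fm_dist D" and r: "r > 0" and nu: "norm \<nu> = 1"
  shows "C2sq (proj D \<nu>) (proj (empirical r xs) \<nu>) \<le> (\<integral>z. norm z \<partial>D) + (\<Sum>i<r. norm (xs i)) / real r"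
proof -
  have "(\<integral>z. \<bar>z \<bullet> \<nu>\<bar> \<partial>D) \<le> (\<integral>z. norm z \<partial>D)"
    by (rule E_abs_inner_le[OF fm_distD(7)[OF fD] _ nu]) (simp add: measurable_cong_sets[OF fm_distD(2)[OF fD] refl])
  moreover have "(\<Sum>i<r. \<bar>xs i \<bullet> \<nu>\<bar>) \<le> (\<Sum>i<r. norm (xs i))"
    by (intro sum_mono) (use Cauchy_Schwarz_ineq2[of "xs _" \<nu>] nu in auto)
  then have "(\<Sum>i<r. \<bar>xs i \<bullet> \<nu>\<bar>) / real r \<le> (\<Sum>i<r. norm (xs i)) / real r"
    by (intro divide_right_mono) auto
  ultimately show ?thesis using C2emp_bound(1)[OF fD r, of \<nu> xs] by linarith
qed

lemma iid_norm_int: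
  fixes P :: "(real ^ 'm) measure"
  assumes fP: "fm_dist P"
  shows "integrable (iid_samples r P) (\<lambda>xs. (\<integral>z. norm z \<partial>D) + (\<Sum>i<r. norm (xs i)) / real r)"
proof -
  interpret I: prob_space "iid_samples r P" by (rule iid_prob[OF fm_distD(1)[OF fP]])
  have "integrable (iid_samples r P) (\<lambda>xs. norm (xs i))" if "i < r" for i
    by (rule iid_comp_integral(2)[OF fm_distD(1)[OF fP] that])
       (use fm_distD(7)[OF fP] fm_distD(2)[OF fP] in \<open>auto simp: measurable_cong_sets[OF fm_distD(2)[OF fP] refl]\<close>)
  then show ?thesis by (intro Bochner_Integration.integrable_add I.integrable_const integrable_divide integrable_sum) auto
qed

lemma joint_int:
  fixes D P :: "(real ^ 'm) measure"
  assumes fD: "fm_dist D" and fP: "fm_dist P" and r: "r > 0"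
  shows "integrable ((sphere_measure :: (real^'m) measure) \<Otimes>\<^sub>M iid_samples r P) (\<lambda>p. C2sq (proj D (fst p)) (proj (empirical r (snd p)) (fst p)))"
proof (rule Bochner_Integration.integrable_bound)
  interpret I: prob_space "iid_samples r P" by (rule iid_prob[OF fm_distD(1)[OF fP]])
  show "integrable ((sphere_measure :: (real^'m) measure) \<Otimes>\<^sub>M iid_samples r P) (\<lambda>p. (\<integral>z. norm z \<partial>D) + (\<Sum>i<r. norm (snd p i)) / real r)"
    using integrable_snd_only[OF finite_sphere I.sigma_finite_measure_axioms iid_norm_int[OF fP, of r D]] by simp
  show "(\<lambda>p. C2sq (proj D (fst p)) (proj (empirical r (snd p)) (fst p))) \<in> borel_measurable ((sphere_measure :: (real^'m) measure) \<Otimes>\<^sub>M iid_samples r P)"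
  proof (rule C2emp_meas[OF fm_distD(2,3)[OF fD] r])
    fix i assume i: "i < r"
    have [measurable]: "(\<lambda>xs. xs i) \<in> borel_measurable (iid_samples r P)" by (rule iid_comp_meas[OF fm_distD(2)[OF fP] i])
    show "(\<lambda>p. snd p i) \<in> borel_measurable ((sphere_measure :: (real^'m) measure) \<Otimes>\<^sub>M iid_samples r P)" by measurable
  next
    have idm: "(\<lambda>x. x) \<in> borel_measurable (sphere_measure :: (real^'m) measure)"
      by (rule meas_on_sphere) simp
    show "fst \<in> borel_measurable ((sphere_measure :: (real^'m) measure) \<Otimes>\<^sub>M iid_samples r P)"
      using measurable_compose[OF measurable_fst[of sphere_measure "iid_samples r P"] idm] by simp
  qed
  show "AE p in (sphere_measure :: (real^'m) measure) \<Otimes>\<^sub>M iid_samples r P. norm (C2sq (proj D (fst p)) (proj (empirical r (snd p)) (fst p)))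
      \<le> norm ((\<integral>z. norm z \<partial>D) + (\<Sum>i<r. norm (snd p i)) / real r)"
  proof (rule AE_I2)
    fix p assume "p \<in> space ((sphere_measure :: (real^'m) measure) \<Otimes>\<^sub>M iid_samples r P)"
    then have nu: "norm (fst p) = 1" by (auto simp: space_pair_measure space_sphere_measure)
    have "0 \<le> (\<integral>z. norm z \<partial>D) + (\<Sum>i<r. norm (snd p i)) / real r"
      by (intro add_nonneg_nonneg integral_nonneg_AE divide_nonneg_nonneg sum_nonneg) auto
    then show "norm (C2sq (proj D (fst p)) (proj (empirical r (snd p)) (fst p)))
      \<le> norm ((\<integral>z. norm z \<partial>D) + (\<Sum>i<r. norm (snd p i)) / real r)"
      using C2emp_bound2[OF fD r nu, of "snd p"] C2emp_bound(2)[OF fD r] by simp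
  qed
qed

lemma C2QP_int:
  fixes P Q :: "(real ^ 'm) measure"
  assumes fP: "fm_dist P" and fQ: "fm_dist Q"
  shows "integrable (sphere_measure :: (real^'m) measure) (\<lambda>\<nu>. C2sq (proj Q \<nu>) (proj P \<nu>))"
proof -
  interpret S: finite_measure "sphere_measure :: (real^'m) measure" by (rule finite_sphere)
  show ?thesis
  proof (rule S.integrable_const_bound)
    show "(\<lambda>\<nu>. C2sq (proj Q \<nu>) (proj P \<nu>)) \<in> borel_measurable (sphere_measure :: (real^'m) measure)"
      by (rule meas_on_sphere, rule C2sq_proj_meas) (use fm_distD[OF fP] fm_distD[OF fQ] in auto)
    show "AE \<nu> in (sphere_measure :: (real^'m) measure). norm (C2sq (proj Q \<nu>) (proj P \<nu>)) \<le> (\<integral>z. norm z \<partial>Q) + (\<integral>z. norm z \<partial>P)"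
    proof (rule AE_I2)
      fix \<nu> :: "real^'m" assume "\<nu> \<in> space sphere_measure"
      then have nu: "norm \<nu> = 1" by (simp add: space_sphere_measure)
      have "C2sq (proj Q \<nu>) (proj P \<nu>) \<le> (\<integral>z. \<bar>z \<bullet> \<nu>\<bar> \<partial>Q) + (\<integral>z. \<bar>z \<bullet> \<nu>\<bar> \<partial>P)"
        unfolding proj_def by (rule L1_diff(5)[OF fm_distD(1,6,4)[OF fQ] fm_distD(1,6,4)[OF fP]])
      moreover have "0 \<le> C2sq (proj Q \<nu>) (proj P \<nu>)" unfolding C2sq_def by simp
      moreover have "(\<integral>z. \<bar>z \<bullet> \<nu>\<bar> \<partial>Q) \<le> (\<integral>z. norm z \<partial>Q)"
        by (rule E_abs_inner_le[OF fm_distD(7)[OF fQ] _ nu]) (simp add: measurable_cong_sets[OF fm_distD(2)[OF fQ] refl])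
      moreover have "(\<integral>z. \<bar>z \<bullet> \<nu>\<bar> \<partial>P) \<le> (\<integral>z. norm z \<partial>P)"
        by (rule E_abs_inner_le[OF fm_distD(7)[OF fP] _ nu]) (simp add: measurable_cong_sets[OF fm_distD(2)[OF fP] refl])
      ultimately show "norm (C2sq (proj Q \<nu>) (proj P \<nu>)) \<le> (\<integral>z. norm z \<partial>Q) + (\<integral>z. norm z \<partial>P)"
        by simp
    qed
  qed
qed

lemma S2_unbiased:
  fixes P Q :: "(real ^ 'm) measure"
  assumes fP: "fm_dist P" and fQ: "fm_dist Q" and r: "r > 0"
  shows "(\<integral>xs. S2sq Q (empirical r xs) \<partial>iid_samples r P)
       = S2sq Q P + (\<integral>xs. S2sq P (empirical r xs) \<partial>iid_samples r P)"
proof -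
  let ?S = "sphere_measure :: (real^'m) measure" and ?I = "iid_samples r P"
  interpret S: finite_measure ?S by (rule finite_sphere)
  interpret I: prob_space ?I by (rule iid_prob[OF fm_distD(1)[OF fP]])
  interpret PS: pair_sigma_finite ?S ?I
    unfolding pair_sigma_finite_def using S.sigma_finite_measure_axioms I.sigma_finite_measure_axioms by blast
  define CQ where "CQ = (\<lambda>\<nu> xs. C2sq (proj Q \<nu>) (proj (empirical r xs) \<nu>))"
  define CP where "CP = (\<lambda>\<nu> xs. C2sq (proj P \<nu>) (proj (empirical r xs) \<nu>))"
  have jQ: "integrable (?S \<Otimes>\<^sub>M ?I) (case_prod CQ)"
    using joint_int[OF fQ fP r] unfolding CQ_def by (simp add: split_beta')
  have jP: "integrable (?S \<Otimes>\<^sub>M ?I) (case_prod CP)"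
    using joint_int[OF fP fP r] unfolding CP_def by (simp add: split_beta')
  have "(\<integral>xs. S2sq Q (empirical r xs) \<partial>?I) = (\<integral>xs. (\<integral>\<nu>. CQ \<nu> xs \<partial>?S) \<partial>?I)"
    unfolding S2sq_def CQ_def ..
  also have "\<dots> = (\<integral>\<nu>. (\<integral>xs. CQ \<nu> xs \<partial>?I) \<partial>?S)"
    by (rule PS.Fubini_integral[OF jQ])
  also have "\<dots> = (\<integral>\<nu>. C2sq (proj Q \<nu>) (proj P \<nu>) + (\<integral>xs. CP \<nu> xs \<partial>?I) \<partial>?S)"
    unfolding CQ_def CP_def by (simp add: key_nu[OF fP fQ r])
  also have "\<dots> = S2sq Q P + (\<integral>\<nu>. (\<integral>xs. CP \<nu> xs \<partial>?I) \<partial>?S)"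
  proof -
    have i2: "integrable ?S (\<lambda>\<nu>. \<integral>xs. CP \<nu> xs \<partial>?I)"
      using PS.integrable_fst'[OF jP] by simp
    show ?thesis unfolding S2sq_def
      by (rule Bochner_Integration.integral_add[OF C2QP_int[OF fP fQ] i2])
  qed
  also have "(\<integral>\<nu>. (\<integral>xs. CP \<nu> xs \<partial>?I) \<partial>?S) = (\<integral>xs. (\<integral>\<nu>. CP \<nu> xs \<partial>?S) \<partial>?I)"
    by (rule PS.Fubini_integral[OF jP, symmetric])
  also have "\<dots> = (\<integral>xs. S2sq P (empirical r xs) \<partial>?I)"
    unfolding S2sq_def CP_def ..
  finally show ?thesis .
qed

lemma grad_eq:
  fixes f :: "'a::real_inner \<Rightarrow> real"
  assumes "GDERIV f x :> D"
  shows "grad f x = D"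
proof -
  have uniq: "D' = D" if "GDERIV f x :> D'" for D'
  proof -
    have "(\<lambda>h. h \<bullet> D') = (\<lambda>h. h \<bullet> D)"
      using has_derivative_unique that assms unfolding gderiv_def by blast
    then have "(D' - D) \<bullet> D' = (D' - D) \<bullet> D" by metis
    then have "(D' - D) \<bullet> (D' - D) = 0" by (simp add: inner_diff_right)
    then show ?thesis by simp
  qed
  show ?thesis unfolding grad_def
  proof (rule the_equality)
    show "GDERIV f x :> D" by (rule assms)
  next
    fix D' assume "GDERIV f x :> D'" then show "D' = D" by (rule uniq)
  qed
qed

lemma cone_eq: "{t *\<^sub>R x | t x. t \<in> {0<..1} \<and> x \<in> sphere (0::real^'m) 1} = cball 0 1 - {0}"
proof (intro equalityI subsetI)
  fix z assume "z \<in> {t *\<^sub>R x | t x. t \<in> {0<..1} \<and> x \<in> sphere (0::real^'m) 1}"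
  then obtain t x where "z = t *\<^sub>R x" "t \<in> {0<..1}" "norm x = 1" by auto
  then show "z \<in> cball 0 1 - {0}" by auto
next
  fix z :: "real^'m" assume z: "z \<in> cball 0 1 - {0}"
  then have n: "norm z > 0" "norm z \<le> 1" by auto
  have "z = norm z *\<^sub>R (z /\<^sub>R norm z)" using n by simp
  moreover have "norm (z /\<^sub>R norm z) = 1" using n by simp
  ultimately show "z \<in> {t *\<^sub>R x | t x. t \<in> {0<..1} \<and> x \<in> sphere (0::real^'m) 1}"
    using n by (intro CollectI exI[of _ "norm z"] exI[of _ "z /\<^sub>R norm z"]) auto
qed

lemma mul_inv1: "b \<noteq> 0 \<Longrightarrow> b * (1 / b) = (1::real)" by simp

lemma if_nonzero: "a = (if c then x else 0) \<Longrightarrow> a \<noteq> 0 \<Longrightarrow> a = x"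
  by (cases c) auto

lemma sphere_mass:
  assumes "emeasure (sphere_measure :: (real^'m) measure) (sphere 0 1) \<noteq> 0"
  shows "emeasure (sphere_measure :: (real^'m) measure) (sphere 0 1)
       = ennreal (2 * pi powr (real CARD('m) / 2) / Gamma (real CARD('m) / 2))"
proof -
  let ?C = "{t *\<^sub>R x | t x. t \<in> {0<..1} \<and> x \<in> sphere (0::real^'m) 1}"
  have "emeasure (sphere_measure :: (real^'m) measure) (sphere 0 1) = ennreal (real CARD('m)) * emeasure lborel ?C"
  proof (rule if_nonzero[OF _ assms])
    show "emeasure (sphere_measure :: (real^'m) measure) (sphere 0 1) =
      (if sphere 0 1 \<in> sigma_sets (sphere 0 1) (sets (restrict_space borel (sphere (0::real^'m) 1))) \<and>
          measure_space (sphere 0 1) (sigma_sets (sphere 0 1) (sets (restrict_space borel (sphere (0::real^'m) 1))))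
            (\<lambda>A. ennreal (real CARD('m)) * emeasure lborel {t *\<^sub>R x | t x. t \<in> {0<..1} \<and> x \<in> A})
       then ennreal (real CARD('m)) * emeasure lborel ?C else 0)"
      by (simp only: sphere_measure_def emeasure_measure_of_conv)
  qed
  also have "emeasure lborel ?C = emeasure lborel (cball (0::real^'m) 1)"
    unfolding cone_eq by (rule emeasure_Diff_null_set) (auto intro: finite_imp_null_set_lborel)
  also have "\<dots> = ennreal (unit_ball_vol (real CARD('m)))" by (simp add: emeasure_cball)
  also have "ennreal (real CARD('m)) * ennreal (unit_ball_vol (real CARD('m)))
      = ennreal (real CARD('m) * unit_ball_vol (real CARD('m)))"
    by (simp add: ennreal_mult)
  also have "real CARD('m) * unit_ball_vol (real CARD('m)) = 2 * pi powr (real CARD('m) / 2) / Gamma (real CARD('m) / 2)"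
  proof -
    define n where "n = real CARD('m)"
    have n: "n > 0" unfolding n_def by simp
    have G: "Gamma (n / 2 + 1) = (n / 2) * Gamma (n / 2)"
      by (rule Gamma_plus1) (use n nonpos_Ints_nonpos in force)
    have Gp: "Gamma (n / 2) > 0" using n by simp
    have "n * unit_ball_vol n = n * (pi powr (n / 2) / ((n / 2) * Gamma (n / 2)))"
      unfolding unit_ball_vol_def G ..
    also have "\<dots> = 2 * pi powr (n / 2) / Gamma (n / 2)" using n Gp by (simp add: field_simps)
    finally show ?thesis unfolding n_def .
  qed
  finally show ?thesis .
qed

lemma uniform_sphere_integral:
  fixes \<gamma> :: "real ^ 'm \<Rightarrow> 'b::{banach, second_countable_topology}"
  assumes ig: "integrable (sphere_measure :: (real^'m) measure) \<gamma>"
  shows "(2 * pi powr (real CARD('m) / 2) / Gamma (real CARD('m) / 2)) *\<^sub>R (\<integral>\<nu>. \<gamma> \<nu> \<partial>(uniform_sphere :: (real^'m) measure))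
       = (\<integral>\<nu>. \<gamma> \<nu> \<partial>(sphere_measure :: (real^'m) measure))"
proof -
  let ?S = "sphere_measure :: (real^'m) measure"
  let ?B = "2 * pi powr (real CARD('m) / 2) / Gamma (real CARD('m) / 2)"
  have gm: "\<gamma> \<in> borel_measurable ?S" using ig by auto
  have Sset: "sphere 0 1 \<in> sets ?S" using sets.top[of ?S] by (simp add: space_sphere_measure)
  show ?thesis
  proof (cases "emeasure ?S (sphere 0 1) = 0")
    case True
    have fm: "(\<lambda>x. indicator (sphere 0 1) x / emeasure ?S (sphere 0 1)) \<in> borel_measurable ?S"
      using Sset by measurable
    have AES: "AE x in ?S. \<gamma> x = 0"
      by (rule AE_I[where N="sphere 0 1"]) (use True Sset in \<open>auto simp: space_sphere_measure\<close>)
    then have "AE x in uniform_sphere. \<gamma> x = 0"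
      unfolding uniform_sphere_def uniform_measure_def AE_density[OF fm] by auto
    then have "(\<integral>\<nu>. \<gamma> \<nu> \<partial>(uniform_sphere :: (real^'m) measure)) = 0"
      by (rule integral_eq_zero_AE)
    moreover have "(\<integral>\<nu>. \<gamma> \<nu> \<partial>?S) = 0"
      using AES by (rule integral_eq_zero_AE)
    ultimately show ?thesis by simp
  next
    case False
    have mass: "emeasure ?S (sphere 0 1) = ennreal ?B" by (rule sphere_mass[OF False])
    have Bpos: "?B > 0" by simp
    have fe: "(\<lambda>x::real^'m. indicator (sphere 0 1) x / ennreal ?B) = (\<lambda>x::real^'m. ennreal (indicator (sphere 0 1) x / ?B))"
    proof (rule ext)
      fix x :: "real^'m"
      show "indicator (sphere 0 1) x / ennreal ?B = ennreal (indicator (sphere 0 1) x / ?B)"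
      proof (cases "x \<in> sphere 0 1")
        case True
        have "ennreal 1 / ennreal ?B = ennreal (1 / ?B)" by (rule divide_ennreal) (use Bpos in auto)
        then show ?thesis using True by simp
      next
        case False then show ?thesis by simp
      qed
    qed
    have "uniform_sphere = density ?S (\<lambda>x. ennreal (indicator (sphere 0 1) x / ?B))"
      unfolding uniform_sphere_def uniform_measure_def mass fe ..
    moreover have "(\<integral>\<nu>. \<gamma> \<nu> \<partial>density ?S (\<lambda>x. ennreal (indicator (sphere 0 1) x / ?B)))
        = (\<integral>\<nu>. (indicator (sphere 0 1) \<nu> / ?B) *\<^sub>R \<gamma> \<nu> \<partial>?S)"
    proof (rule integral_density[OF gm])
      show "(\<lambda>x. indicator (sphere 0 1) x / ?B) \<in> borel_measurable ?S" using Sset by measurable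
      show "AE x in ?S. 0 \<le> indicator (sphere 0 1) x / ?B" using Bpos by (intro AE_I2) simp
    qed
    ultimately have "(\<integral>\<nu>. \<gamma> \<nu> \<partial>(uniform_sphere :: (real^'m) measure))
        = (\<integral>\<nu>. (indicator (sphere 0 1) \<nu> / ?B) *\<^sub>R \<gamma> \<nu> \<partial>?S)" by simp
    also have "\<dots> = (\<integral>\<nu>. (1 / ?B) *\<^sub>R \<gamma> \<nu> \<partial>?S)"
      by (intro Bochner_Integration.integral_cong) (auto simp: space_sphere_measure)
    also have "\<dots> = (1 / ?B) *\<^sub>R (\<integral>\<nu>. \<gamma> \<nu> \<partial>?S)" by simp
    finally have u: "(\<integral>\<nu>. \<gamma> \<nu> \<partial>(uniform_sphere :: (real^'m) measure)) = (1 / ?B) *\<^sub>R (\<integral>\<nu>. \<gamma> \<nu> \<partial>?S)" .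
    have "?B * (1 / ?B) = 1" by (rule mul_inv1) (use Bpos in linarith)
    then show ?thesis unfolding u scaleR_scaleR by simp
  qed
qed

lemma part3:
  shows "(\<forall>(P :: (real ^ 'm) measure) (G :: real ^ 'd \<Rightarrow> (real ^ 'm) measure) \<Theta> (r::nat).
      fm_dist P \<and> r > 0 \<and> open \<Theta> \<and> (\<forall>\<theta>\<in>\<Theta>. fm_dist (G \<theta>)) \<and>
      \<comment> \<open>regularity: differentiability\<close>
      (\<forall>\<theta>\<in>\<Theta>. (\<lambda>t. S2sq (G t) P) differentiable (at \<theta>)) \<and>
      (\<forall>\<theta>\<in>\<Theta>. \<forall>xs\<in>space (iid_samples r P).
          (\<lambda>t. S2sq (G t) (empirical r xs)) differentiable (at \<theta>)) \<and>
      (\<forall>\<theta>\<in>\<Theta>. \<forall>\<nu>\<in>sphere 0 1.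
          (\<lambda>t. C2sq (proj (G t) \<nu>) (proj P \<nu>)) differentiable (at \<theta>)) \<and>
      (\<forall>\<theta>\<in>\<Theta>. \<forall>\<nu>\<in>sphere 0 1. \<forall>xs\<in>space (iid_samples r P).
          (\<lambda>t. C2sq (proj (G t) \<nu>) (proj (empirical r xs) \<nu>)) differentiable (at \<theta>)) \<and>
      \<comment> \<open>regularity: gradient commutes with expectation over the samples\<close>
      (\<forall>\<theta>\<in>\<Theta>.
          integrable (iid_samples r P) (\<lambda>xs. grad (\<lambda>t. S2sq (G t) (empirical r xs)) \<theta>) \<and>
          GDERIV (\<lambda>t. \<integral>xs. S2sq (G t) (empirical r xs) \<partial>iid_samples r P) \<theta> :>
            (\<integral>xs. grad (\<lambda>t. S2sq (G t) (empirical r xs)) \<theta> \<partial>iid_samples r P)) \<and>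
      (\<forall>\<theta>\<in>\<Theta>. \<forall>\<nu>\<in>sphere 0 1.
          integrable (iid_samples r P)
            (\<lambda>xs. grad (\<lambda>t. C2sq (proj (G t) \<nu>) (proj (empirical r xs) \<nu>)) \<theta>) \<and>
          GDERIV (\<lambda>t. \<integral>xs. C2sq (proj (G t) \<nu>) (proj (empirical r xs) \<nu>) \<partial>iid_samples r P) \<theta> :>
            (\<integral>xs. grad (\<lambda>t. C2sq (proj (G t) \<nu>) (proj (empirical r xs) \<nu>)) \<theta> \<partial>iid_samples r P)) \<and>
      \<comment> \<open>regularity: gradient commutes with integration over the sphere\<close>
      (\<forall>\<theta>\<in>\<Theta>.
          integrable sphere_measure (\<lambda>\<nu>. grad (\<lambda>t. C2sq (proj (G t) \<nu>) (proj P \<nu>)) \<theta>) \<and>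
          grad (\<lambda>t. S2sq (G t) P) \<theta> =
            (\<integral>\<nu>. grad (\<lambda>t. C2sq (proj (G t) \<nu>) (proj P \<nu>)) \<theta> \<partial>sphere_measure)) \<and>
      (\<forall>\<theta>\<in>\<Theta>. \<forall>xs\<in>space (iid_samples r P).
          integrable sphere_measure
            (\<lambda>\<nu>. grad (\<lambda>t. C2sq (proj (G t) \<nu>) (proj (empirical r xs) \<nu>)) \<theta>) \<and>
          grad (\<lambda>t. S2sq (G t) (empirical r xs)) \<theta> =
            (\<integral>\<nu>. grad (\<lambda>t. C2sq (proj (G t) \<nu>) (proj (empirical r xs) \<nu>)) \<theta> \<partial>sphere_measure))
      \<longrightarrow>
      (\<forall>\<theta>\<in>\<Theta>.
         (\<integral>xs. grad (\<lambda>t. S2sq (G t) (empirical r xs)) \<theta> \<partial>iid_samples r P)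
           = grad (\<lambda>t. S2sq (G t) P) \<theta>
         \<and>
         (2 * pi powr (real CARD('m) / 2) / Gamma (real CARD('m) / 2)) *\<^sub>R
           (\<integral>\<nu>. (\<integral>xs. grad (\<lambda>t. C2sq (proj (G t) \<nu>) (proj (empirical r xs) \<nu>)) \<theta>
                        \<partial>iid_samples r P) \<partial>uniform_sphere)
           = grad (\<lambda>t. S2sq (G t) P) \<theta>))"
proof (intro allI impI ballI conjI)
  fix P :: "(real ^ 'm) measure" and G :: "real ^ 'd \<Rightarrow> (real ^ 'm) measure" and \<Theta> :: "(real ^ 'd) set" and r :: nat and \<theta>
  assume H: "fm_dist P \<and> r > 0 \<and> open \<Theta> \<and> (\<forall>\<theta>\<in>\<Theta>. fm_dist (G \<theta>)) \<and>
      (\<forall>\<theta>\<in>\<Theta>. (\<lambda>t. S2sq (G t) P) differentiable (at \<theta>)) \<and>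
      (\<forall>\<theta>\<in>\<Theta>. \<forall>xs\<in>space (iid_samples r P).
          (\<lambda>t. S2sq (G t) (empirical r xs)) differentiable (at \<theta>)) \<and>
      (\<forall>\<theta>\<in>\<Theta>. \<forall>\<nu>\<in>sphere 0 1.
          (\<lambda>t. C2sq (proj (G t) \<nu>) (proj P \<nu>)) differentiable (at \<theta>)) \<and>
      (\<forall>\<theta>\<in>\<Theta>. \<forall>\<nu>\<in>sphere 0 1. \<forall>xs\<in>space (iid_samples r P).
          (\<lambda>t. C2sq (proj (G t) \<nu>) (proj (empirical r xs) \<nu>)) differentiable (at \<theta>)) \<and>
      (\<forall>\<theta>\<in>\<Theta>.
          integrable (iid_samples r P) (\<lambda>xs. grad (\<lambda>t. S2sq (G t) (empirical r xs)) \<theta>) \<and>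
          GDERIV (\<lambda>t. \<integral>xs. S2sq (G t) (empirical r xs) \<partial>iid_samples r P) \<theta> :>
            (\<integral>xs. grad (\<lambda>t. S2sq (G t) (empirical r xs)) \<theta> \<partial>iid_samples r P)) \<and>
      (\<forall>\<theta>\<in>\<Theta>. \<forall>\<nu>\<in>sphere 0 1.
          integrable (iid_samples r P)
            (\<lambda>xs. grad (\<lambda>t. C2sq (proj (G t) \<nu>) (proj (empirical r xs) \<nu>)) \<theta>) \<and>
          GDERIV (\<lambda>t. \<integral>xs. C2sq (proj (G t) \<nu>) (proj (empirical r xs) \<nu>) \<partial>iid_samples r P) \<theta> :>
            (\<integral>xs. grad (\<lambda>t. C2sq (proj (G t) \<nu>) (proj (empirical r xs) \<nu>)) \<theta> \<partial>iid_samples r P)) \<and>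
      (\<forall>\<theta>\<in>\<Theta>.
          integrable sphere_measure (\<lambda>\<nu>. grad (\<lambda>t. C2sq (proj (G t) \<nu>) (proj P \<nu>)) \<theta>) \<and>
          grad (\<lambda>t. S2sq (G t) P) \<theta> =
            (\<integral>\<nu>. grad (\<lambda>t. C2sq (proj (G t) \<nu>) (proj P \<nu>)) \<theta> \<partial>sphere_measure)) \<and>
      (\<forall>\<theta>\<in>\<Theta>. \<forall>xs\<in>space (iid_samples r P).
          integrable sphere_measure
            (\<lambda>\<nu>. grad (\<lambda>t. C2sq (proj (G t) \<nu>) (proj (empirical r xs) \<nu>)) \<theta>) \<and>
          grad (\<lambda>t. S2sq (G t) (empirical r xs)) \<theta> =
            (\<integral>\<nu>. grad (\<lambda>t. C2sq (proj (G t) \<nu>) (proj (empirical r xs) \<nu>)) \<theta> \<partial>sphere_measure))"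
  assume th: "\<theta> \<in> \<Theta>"
  have fP: "fm_dist P" and r: "r > 0" and op: "open \<Theta>" and fG: "\<And>t. t \<in> \<Theta> \<Longrightarrow> fm_dist (G t)"
    using H by auto
  have D1: "GDERIV (\<lambda>t. \<integral>xs. S2sq (G t) (empirical r xs) \<partial>iid_samples r P) \<theta> :>
            (\<integral>xs. grad (\<lambda>t. S2sq (G t) (empirical r xs)) \<theta> \<partial>iid_samples r P)"
    using H th by blast
  have D2: "GDERIV (\<lambda>t. \<integral>xs. C2sq (proj (G t) \<nu>) (proj (empirical r xs) \<nu>) \<partial>iid_samples r P) \<theta> :>
            (\<integral>xs. grad (\<lambda>t. C2sq (proj (G t) \<nu>) (proj (empirical r xs) \<nu>)) \<theta> \<partial>iid_samples r P)"
    if "\<nu> \<in> sphere 0 1" for \<nu>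
    using H th that by blast
  have S1: "integrable sphere_measure (\<lambda>\<nu>. grad (\<lambda>t. C2sq (proj (G t) \<nu>) (proj P \<nu>)) \<theta>)"
    and S2: "grad (\<lambda>t. S2sq (G t) P) \<theta> =
            (\<integral>\<nu>. grad (\<lambda>t. C2sq (proj (G t) \<nu>) (proj P \<nu>)) \<theta> \<partial>sphere_measure)"
    using H th by blast+
  have transfer: "GDERIV g \<theta> :> E"
    if d: "GDERIV f \<theta> :> E" and eq: "\<And>t. t \<in> \<Theta> \<Longrightarrow> f t = g t + K"
    for f g :: "real ^ 'd \<Rightarrow> real" and E K
  proof -
    have "GDERIV (\<lambda>t. f t - K) \<theta> :> E - 0" by (rule GDERIV_diff[OF d GDERIV_const])
    then have "((\<lambda>t. f t - K) has_derivative (\<lambda>h. h \<bullet> E)) (at \<theta>)" unfolding gderiv_def by simp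
    then have "(g has_derivative (\<lambda>h. h \<bullet> E)) (at \<theta>)"
      by (rule has_derivative_transform_within_open[OF _ op th]) (simp add: eq)
    then show ?thesis unfolding gderiv_def .
  qed
  have c1: "GDERIV (\<lambda>t. S2sq (G t) P) \<theta> :> (\<integral>xs. grad (\<lambda>t. S2sq (G t) (empirical r xs)) \<theta> \<partial>iid_samples r P)"
    by (rule transfer[OF D1, where K="\<integral>xs. S2sq P (empirical r xs) \<partial>iid_samples r P"])
       (rule S2_unbiased[OF fP fG r])
  show "(\<integral>xs. grad (\<lambda>t. S2sq (G t) (empirical r xs)) \<theta> \<partial>iid_samples r P) = grad (\<lambda>t. S2sq (G t) P) \<theta>"
    using grad_eq[OF c1] by simp
  have c2: "(\<integral>xs. grad (\<lambda>t. C2sq (proj (G t) \<nu>) (proj (empirical r xs) \<nu>)) \<theta> \<partial>iid_samples r P)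
      = grad (\<lambda>t. C2sq (proj (G t) \<nu>) (proj P \<nu>)) \<theta>" if nu: "\<nu> \<in> sphere 0 1" for \<nu>
  proof -
    have "GDERIV (\<lambda>t. C2sq (proj (G t) \<nu>) (proj P \<nu>)) \<theta> :>
        (\<integral>xs. grad (\<lambda>t. C2sq (proj (G t) \<nu>) (proj (empirical r xs) \<nu>)) \<theta> \<partial>iid_samples r P)"
      by (rule transfer[OF D2[OF nu], where K="\<integral>xs. C2sq (proj P \<nu>) (proj (empirical r xs) \<nu>) \<partial>iid_samples r P"])
         (rule key_nu[OF fP fG r])
    from grad_eq[OF this] show ?thesis by simp
  qed
  have sp: "space (uniform_sphere :: (real^'m) measure) = sphere 0 1"
    unfolding uniform_sphere_def uniform_measure_def by (simp add: space_sphere_measure)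
  have "(\<integral>\<nu>. (\<integral>xs. grad (\<lambda>t. C2sq (proj (G t) \<nu>) (proj (empirical r xs) \<nu>)) \<theta> \<partial>iid_samples r P) \<partial>uniform_sphere)
      = (\<integral>\<nu>. grad (\<lambda>t. C2sq (proj (G t) \<nu>) (proj P \<nu>)) \<theta> \<partial>uniform_sphere)"
    by (rule Bochner_Integration.integral_cong[OF refl]) (simp add: sp c2)
  then show "(2 * pi powr (real CARD('m) / 2) / Gamma (real CARD('m) / 2)) *\<^sub>R
           (\<integral>\<nu>. (\<integral>xs. grad (\<lambda>t. C2sq (proj (G t) \<nu>) (proj (empirical r xs) \<nu>)) \<theta>
                        \<partial>iid_samples r P) \<partial>uniform_sphere)
           = grad (\<lambda>t. S2sq (G t) P) \<theta>"
    using uniform_sphere_integral[OF S1] S2 by simp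
qed

theorem theorem5:
  shows
  \<comment> \<open>(i) independent sum\<close>
  "(\<forall>(M :: 's measure) (X :: 's \<Rightarrow> real ^ 'm) Y A.
      prob_space M \<and>
      X \<in> borel_measurable M \<and> Y \<in> borel_measurable M \<and> A \<in> borel_measurable M \<and>
      integrable M (\<lambda>\<omega>. norm (X \<omega>)) \<and> integrable M (\<lambda>\<omega>. norm (Y \<omega>)) \<and>
      integrable M (\<lambda>\<omega>. norm (A \<omega>)) \<and>
      prob_space.indep_var M borel A borel X \<and> prob_space.indep_var M borel A borel Y
      \<longrightarrow> S2sq (distr M borel (\<lambda>\<omega>. A \<omega> + X \<omega>)) (distr M borel (\<lambda>\<omega>. A \<omega> + Y \<omega>))
          \<le> S2sq (distr M borel X) (distr M borel Y))
   \<and>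
  \<comment> \<open>(ii) scaling\<close>
   (\<forall>(M :: 's measure) (X :: 's \<Rightarrow> real ^ 'm) Y (c::real).
      prob_space M \<and>
      X \<in> borel_measurable M \<and> Y \<in> borel_measurable M \<and>
      integrable M (\<lambda>\<omega>. norm (X \<omega>)) \<and> integrable M (\<lambda>\<omega>. norm (Y \<omega>)) \<and> c > 0
      \<longrightarrow> S2sq (distr M borel (\<lambda>\<omega>. c *\<^sub>R X \<omega>)) (distr M borel (\<lambda>\<omega>. c *\<^sub>R Y \<omega>))
          = c * S2sq (distr M borel X) (distr M borel Y))
   \<and>
  \<comment> \<open>(iii) unbiased sampling gradients\<close>
   (\<forall>(P :: (real ^ 'm) measure) (G :: real ^ 'd \<Rightarrow> (real ^ 'm) measure) \<Theta> (r::nat).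
      fm_dist P \<and> r > 0 \<and> open \<Theta> \<and> (\<forall>\<theta>\<in>\<Theta>. fm_dist (G \<theta>)) \<and>
      \<comment> \<open>regularity: differentiability\<close>
      (\<forall>\<theta>\<in>\<Theta>. (\<lambda>t. S2sq (G t) P) differentiable (at \<theta>)) \<and>
      (\<forall>\<theta>\<in>\<Theta>. \<forall>xs\<in>space (iid_samples r P).
          (\<lambda>t. S2sq (G t) (empirical r xs)) differentiable (at \<theta>)) \<and>
      (\<forall>\<theta>\<in>\<Theta>. \<forall>\<nu>\<in>sphere 0 1.
          (\<lambda>t. C2sq (proj (G t) \<nu>) (proj P \<nu>)) differentiable (at \<theta>)) \<and>
      (\<forall>\<theta>\<in>\<Theta>. \<forall>\<nu>\<in>sphere 0 1. \<forall>xs\<in>space (iid_samples r P).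
          (\<lambda>t. C2sq (proj (G t) \<nu>) (proj (empirical r xs) \<nu>)) differentiable (at \<theta>)) \<and>
      \<comment> \<open>regularity: gradient commutes with expectation over the samples\<close>
      (\<forall>\<theta>\<in>\<Theta>.
          integrable (iid_samples r P) (\<lambda>xs. grad (\<lambda>t. S2sq (G t) (empirical r xs)) \<theta>) \<and>
          GDERIV (\<lambda>t. \<integral>xs. S2sq (G t) (empirical r xs) \<partial>iid_samples r P) \<theta> :>
            (\<integral>xs. grad (\<lambda>t. S2sq (G t) (empirical r xs)) \<theta> \<partial>iid_samples r P)) \<and>
      (\<forall>\<theta>\<in>\<Theta>. \<forall>\<nu>\<in>sphere 0 1.
          integrable (iid_samples r P)
            (\<lambda>xs. grad (\<lambda>t. C2sq (proj (G t) \<nu>) (proj (empirical r xs) \<nu>)) \<theta>) \<and>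
          GDERIV (\<lambda>t. \<integral>xs. C2sq (proj (G t) \<nu>) (proj (empirical r xs) \<nu>) \<partial>iid_samples r P) \<theta> :>
            (\<integral>xs. grad (\<lambda>t. C2sq (proj (G t) \<nu>) (proj (empirical r xs) \<nu>)) \<theta> \<partial>iid_samples r P)) \<and>
      \<comment> \<open>regularity: gradient commutes with integration over the sphere\<close>
      (\<forall>\<theta>\<in>\<Theta>.
          integrable sphere_measure (\<lambda>\<nu>. grad (\<lambda>t. C2sq (proj (G t) \<nu>) (proj P \<nu>)) \<theta>) \<and>
          grad (\<lambda>t. S2sq (G t) P) \<theta> =
            (\<integral>\<nu>. grad (\<lambda>t. C2sq (proj (G t) \<nu>) (proj P \<nu>)) \<theta> \<partial>sphere_measure)) \<and>
      (\<forall>\<theta>\<in>\<Theta>. \<forall>xs\<in>space (iid_samples r P).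
          integrable sphere_measure
            (\<lambda>\<nu>. grad (\<lambda>t. C2sq (proj (G t) \<nu>) (proj (empirical r xs) \<nu>)) \<theta>) \<and>
          grad (\<lambda>t. S2sq (G t) (empirical r xs)) \<theta> =
            (\<integral>\<nu>. grad (\<lambda>t. C2sq (proj (G t) \<nu>) (proj (empirical r xs) \<nu>)) \<theta> \<partial>sphere_measure))
      \<longrightarrow>
      (\<forall>\<theta>\<in>\<Theta>.
         (\<integral>xs. grad (\<lambda>t. S2sq (G t) (empirical r xs)) \<theta> \<partial>iid_samples r P)
           = grad (\<lambda>t. S2sq (G t) P) \<theta>
         \<and>
         (2 * pi powr (real CARD('m) / 2) / Gamma (real CARD('m) / 2)) *\<^sub>R
           (\<integral>\<nu>. (\<integral>xs. grad (\<lambda>t. C2sq (proj (G t) \<nu>) (proj (empirical r xs) \<nu>)) \<theta>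
                        \<partial>iid_samples r P) \<partial>uniform_sphere)
           = grad (\<lambda>t. S2sq (G t) P) \<theta>))"
  apply (intro conjI)
    apply (intro allI impI)
    apply (elim conjE)
    apply (rule part1; assumption)
   apply (intro allI impI)
   apply (elim conjE)
   apply (rule part2; assumption)
  apply (rule part3)
  done

end
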